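(* For a prime $p$, let $I=\{1,2,\dots,\lfloor p/2\rfloor-1\}$, $K=\lceil\log p\rceil$, and let $R\subset I$ be the random set obtained by including each element of $I$ independently with probability $Kp^{-2/3}$. Then, for $p$ sufficiently large and with absolute implied constants: (a) $\mathbb E\,|R\cap(R+R+\{0,1\})|\ll K^3$; (b) $\mathbb P\big(\exists n\in\mathbb Z:\ (1_R*1_R)(n)\ge 9\big)\ll K^{-1}$; (c) $\mathbb P\big(\exists n\in\mathbb Z\setminus\{0\}:\ (1_R*1_{-R})(n)\ge 8\big)\ll K^{-1}$; (d) $\mathbb P\big(\exists n\in[p/5,7p/5]\cap\mathbb Z:\ \#\{T\in\mathcal T(n):T\subset R\}\le K^2\big)\ll K^{-1}$, where $\mathcal T(n)$ is the collection of $3$-element subsets $\{a,b,c\}\subset I$ of pairwise distinct elements with $a+b+c=n$.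
   Context: $(f*g)(n)=\sum_{a+b=n}f(a)g(b)$ denotes additive convolution on $\mathbb Z$; $1_R$ is the indicator function of $R$ and $-R=\{-r:r\in R\}$. *)

theory Defs
  imports "HOL-Analysis.Analysis" "HOL-Computational_Algebra.Primes"
begin

definition conv :: "(int \<Rightarrow> real) \<Rightarrow> (int \<Rightarrow> real) \<Rightarrow> int \<Rightarrow> real" where
  "conv f g n = (\<Sum>\<^sub>\<infinity>a. f a * g (n - a))"

text \<open>Random subset R of a finite set I, each element included independently with
  probability q: the law is P(R = S) = q^|S| (1-q)^(|I|-|S|) for S \<subseteq> I.\<close>
definition rweight :: "int set \<Rightarrow> real \<Rightarrow> int set \<Rightarrow> real" where
  "rweight I q S = q ^ card S * (1 - q) ^ (card I - card S)"

definition rexp :: "int set \<Rightarrow> real \<Rightarrow> (int set \<Rightarrow> real) \<Rightarrow> real" where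
  "rexp I q F = (\<Sum>S\<in>Pow I. rweight I q S * F S)"

definition rprob :: "int set \<Rightarrow> real \<Rightarrow> (int set \<Rightarrow> bool) \<Rightarrow> real" where
  "rprob I q P = (\<Sum>S\<in>{S\<in>Pow I. P S}. rweight I q S)"

definition triples :: "int set \<Rightarrow> int \<Rightarrow> int set set" where
  "triples I n = {T. T \<subseteq> I \<and> card T = 3 \<and> \<Sum>T = n}"

end

theory Submission
  imports Defs "HOL-Real_Asymp.Real_Asymp"
begin

lemma rweight_nonneg: "0 \<le> q \<Longrightarrow> q \<le> 1 \<Longrightarrow> 0 \<le> rweight I q S"
  unfolding rweight_def by simp

lemma rweight_prod:
  assumes "finite I" "S \<subseteq> I"
  shows "rweight I q S = (\<Prod>x\<in>S. q) * (\<Prod>x\<in>I - S. 1 - q)"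
  using assms by (simp add: rweight_def card_Diff_subset finite_subset)

lemma rweight_sum:
  assumes "finite I"
  shows "(\<Sum>S\<in>Pow I. rweight I q S) = 1"
proof -
  have "(\<Sum>S\<in>Pow I. rweight I q S) = (\<Sum>S\<in>Pow I. (\<Prod>x\<in>S. q) * (\<Prod>x\<in>I - S. 1 - q))"
    using assms by (intro sum.cong) (auto simp: rweight_prod)
  also have "\<dots> = (\<Prod>x\<in>I. q + (1 - q))"
    using prod_add[OF assms, of "\<lambda>_. q" "\<lambda>_. 1 - q"] by simp
  finally show ?thesis by simp
qed

lemma rexp_const:
  assumes "finite I" shows "rexp I q (\<lambda>_. c) = c"
  unfolding rexp_def using rweight_sum[OF assms, of q]
  by (simp add: sum_distrib_right[symmetric])

lemma Pow_Un_image: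
  assumes "I1 \<inter> I2 = {}"
  shows "Pow (I1 \<union> I2) = (\<lambda>(a,b). a \<union> b) ` (Pow I1 \<times> Pow I2)"
proof
  show "Pow (I1 \<union> I2) \<subseteq> (\<lambda>(a,b). a \<union> b) ` (Pow I1 \<times> Pow I2)"
  proof
    fix S assume "S \<in> Pow (I1 \<union> I2)"
    then have "S = (\<lambda>(a,b). a \<union> b) (S \<inter> I1, S \<inter> I2)" by auto
    then show "S \<in> (\<lambda>(a,b). a \<union> b) ` (Pow I1 \<times> Pow I2)" by blast
  qed
qed auto

lemma inj_on_Un_pairs:
  assumes "I1 \<inter> I2 = {}"
  shows "inj_on (\<lambda>(a,b). a \<union> b) (Pow I1 \<times> Pow I2)"
proof (rule inj_onI, clarify)
  fix a b c d assume h: "a \<subseteq> I1" "b \<subseteq> I2" "c \<subseteq> I1" "d \<subseteq> I2" "a \<union> b = c \<union> d"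
  have "a = (a \<union> b) \<inter> I1" "c = (c \<union> d) \<inter> I1" "b = (a \<union> b) \<inter> I2" "d = (c \<union> d) \<inter> I2"
    using h assms by auto
  then show "a = c \<and> b = d" using h(5) by metis
qed

lemma rweight_Un:
  assumes "finite I1" "finite I2" "I1 \<inter> I2 = {}" "S1 \<subseteq> I1" "S2 \<subseteq> I2"
  shows "rweight (I1 \<union> I2) q (S1 \<union> S2) = rweight I1 q S1 * rweight I2 q S2"
proof -
  have fs: "finite S1" "finite S2" using assms by (meson finite_subset)+
  have d: "S1 \<inter> S2 = {}" using assms by auto
  have c1: "card (S1 \<union> S2) = card S1 + card S2" using card_Un_disjoint[OF fs d] .
  have c2: "card (I1 \<union> I2) = card I1 + card I2" using card_Un_disjoint assms by blast
  have le: "card S1 \<le> card I1" "card S2 \<le> card I2" using assms by (meson card_mono)+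
  have "card I1 + card I2 - (card S1 + card S2) = (card I1 - card S1) + (card I2 - card S2)"
    using le by simp
  then show ?thesis unfolding rweight_def c1 c2 by (simp add: power_add)
qed

lemma rexp_split:
  assumes "finite I1" "finite I2" "I1 \<inter> I2 = {}"
  shows "rexp (I1 \<union> I2) q F = (\<Sum>S1\<in>Pow I1. rweight I1 q S1 * rexp I2 q (\<lambda>S2. F (S1 \<union> S2)))"
proof -
  have "(\<Sum>S1\<in>Pow I1. rweight I1 q S1 * rexp I2 q (\<lambda>S2. F (S1 \<union> S2)))
      = (\<Sum>S1\<in>Pow I1. \<Sum>S2\<in>Pow I2. rweight I1 q S1 * rweight I2 q S2 * F (S1 \<union> S2))"
    unfolding rexp_def by (simp add: sum_distrib_left mult.assoc)
  also have "\<dots> = (\<Sum>(S1,S2)\<in>Pow I1 \<times> Pow I2. rweight I1 q S1 * rweight I2 q S2 * F (S1 \<union> S2))"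
    by (simp add: sum.cartesian_product)
  also have "\<dots> = (\<Sum>(S1,S2)\<in>Pow I1 \<times> Pow I2. rweight (I1 \<union> I2) q (S1 \<union> S2) * F (S1 \<union> S2))"
    using assms by (intro sum.cong) (auto simp: rweight_Un)
  also have "\<dots> = (\<Sum>S\<in>(\<lambda>(a,b). a \<union> b) ` (Pow I1 \<times> Pow I2). rweight (I1 \<union> I2) q S * F S)"
    by (subst sum.reindex[OF inj_on_Un_pairs[OF assms(3)]]) (simp add: case_prod_unfold)
  also have "\<dots> = rexp (I1 \<union> I2) q F"
    unfolding rexp_def Pow_Un_image[OF assms(3)] ..
  finally show ?thesis ..
qed

lemma rexp_marginal:
  assumes "finite I" "W \<subseteq> I"
  shows "rexp I q (\<lambda>S. G (S \<inter> W)) = rexp W q G"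
proof -
  have fw: "finite W" "finite (I - W)" using assms finite_subset by auto
  have I: "I = W \<union> (I - W)" using assms by auto
  have "rexp I q (\<lambda>S. G (S \<inter> W)) = (\<Sum>S1\<in>Pow W. rweight W q S1 * rexp (I - W) q (\<lambda>S2. G ((S1 \<union> S2) \<inter> W)))"
    by (subst I, subst rexp_split) (use fw in auto)
  also have "\<dots> = (\<Sum>S1\<in>Pow W. rweight W q S1 * rexp (I - W) q (\<lambda>S2. G S1))"
  proof (intro sum.cong refl arg_cong2[where f="(*)"])
    fix S1 assume "S1 \<in> Pow W"
    then show "rexp (I - W) q (\<lambda>S2. G ((S1 \<union> S2) \<inter> W)) = rexp (I - W) q (\<lambda>S2. G S1)"
      unfolding rexp_def by (intro sum.cong refl) (auto intro!: arg_cong[where f=G])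
  qed
  also have "\<dots> = (\<Sum>S1\<in>Pow W. rweight W q S1 * G S1)"
    using rexp_const[OF fw(2)] by simp
  also have "\<dots> = rexp W q G" by (simp add: rexp_def)
  finally show ?thesis .
qed

lemma rprob_rexp: "finite I \<Longrightarrow> rprob I q P = rexp I q (\<lambda>S. if P S then 1 else 0)"
proof -
  assume f: "finite I"
  have "rprob I q P = (\<Sum>S\<in>Pow I. if P S then rweight I q S else 0)"
    unfolding rprob_def using f by (rule sum.inter_filter[OF finite_Pow_iff[THEN iffD2]])
  also have "\<dots> = rexp I q (\<lambda>S. if P S then 1 else 0)"
    unfolding rexp_def by (intro sum.cong) auto
  finally show ?thesis .
qed

lemma rexp_mono:
  assumes "0 \<le> q" "q \<le> 1" "\<And>S. S \<subseteq> I \<Longrightarrow> F S \<le> G S"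
  shows "rexp I q F \<le> rexp I q G"
  unfolding rexp_def using assms by (intro sum_mono mult_left_mono) (auto simp: rweight_nonneg)

lemma rexp_add: "rexp I q (\<lambda>S. F S + G S) = rexp I q F + rexp I q G"
  unfolding rexp_def by (simp add: distrib_left sum.distrib)

lemma rexp_cmult: "rexp I q (\<lambda>S. c * F S) = c * rexp I q F"
  unfolding rexp_def by (simp add: sum_distrib_left mult.left_commute)

lemma rexp_sum: "rexp I q (\<lambda>S. \<Sum>x\<in>X. F x S) = (\<Sum>x\<in>X. rexp I q (F x))"
  unfolding rexp_def by (simp add: sum_distrib_left sum.swap[of _ X])

lemma rexp_subset:
  assumes "finite I" "A \<subseteq> I"
  shows "rexp I q (\<lambda>S. if A \<subseteq> S then 1 else 0) = q ^ card A"
proof -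
  have "rexp I q (\<lambda>S. if A \<subseteq> S then 1 else 0) = rexp I q (\<lambda>S. (\<lambda>T. if A \<subseteq> T then 1 else 0) (S \<inter> A))"
    by (intro arg_cong[where f="rexp I q"]) auto
  also have "\<dots> = rexp A q (\<lambda>T. if A \<subseteq> T then 1 else 0)"
    by (rule rexp_marginal[OF assms])
  also have "\<dots> = (\<Sum>T\<in>Pow A. if T = A then rweight A q T else 0)"
    unfolding rexp_def by (intro sum.cong) auto
  also have "\<dots> = rweight A q A"
    using sum.delta'[of "Pow A" A "rweight A q"] assms finite_subset by force
  also have "\<dots> = q ^ card A" by (simp add: rweight_def)
  finally show ?thesis .
qed

lemma rprob_markov:
  assumes "finite I" "0 \<le> q" "q \<le> 1" "\<And>S. S \<subseteq> I \<Longrightarrow> 0 \<le> F S" "\<And>S. S \<subseteq> I \<Longrightarrow> P S \<Longrightarrow> 1 \<le> F S"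
  shows "rprob I q P \<le> rexp I q F"
  unfolding rprob_rexp[OF assms(1)] using assms by (intro rexp_mono) auto

lemma rprob_nonneg: "0 \<le> q \<Longrightarrow> q \<le> 1 \<Longrightarrow> 0 \<le> rprob I q P"
  unfolding rprob_def by (intro sum_nonneg) (auto simp: rweight_nonneg)

lemma rprob_mono:
  assumes "finite I" "0 \<le> q" "q \<le> 1" "\<And>S. S \<subseteq> I \<Longrightarrow> P S \<Longrightarrow> Q S"
  shows "rprob I q P \<le> rprob I q Q"
  unfolding rprob_rexp[OF assms(1)] using assms by (intro rexp_mono) auto

lemma rprob_disj:
  assumes "finite I" "0 \<le> q" "q \<le> 1"
  shows "rprob I q (\<lambda>S. P S \<or> Q S) \<le> rprob I q P + rprob I q Q"
proof -
  have "rprob I q (\<lambda>S. P S \<or> Q S) \<le> rexp I q (\<lambda>S. (if P S then 1 else 0) + (if Q S then 1 else 0))"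
    using assms by (intro rprob_markov) auto
  then show ?thesis unfolding rexp_add rprob_rexp[OF assms(1)] .
qed

lemma rprob_Ex:
  assumes "finite I" "0 \<le> q" "q \<le> 1" "finite X"
  shows "rprob I q (\<lambda>S. \<exists>x\<in>X. P x S) \<le> (\<Sum>x\<in>X. rprob I q (P x))"
proof -
  have "rprob I q (\<lambda>S. \<exists>x\<in>X. P x S) \<le> rexp I q (\<lambda>S. \<Sum>x\<in>X. if P x S then 1 else 0)"
  proof (intro rprob_markov assms)
    fix S assume "\<exists>x\<in>X. P x S"
    then obtain x where x: "x \<in> X" "P x S" by blast
    have "(\<Sum>x\<in>{x}. if P x S then 1 else 0) \<le> (\<Sum>x\<in>X. if P x S then 1 else (0::real))"
      using x assms(4) by (intro sum_mono2) auto
    then show "1 \<le> (\<Sum>x\<in>X. if P x S then 1 else (0::real))" using x by simp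
  qed (auto intro: sum_nonneg)
  then show ?thesis unfolding rexp_sum rprob_rexp[OF assms(1)] .
qed

lemma rprob_le_Ex:
  assumes "finite I" "0 \<le> q" "q \<le> 1" "finite X" "\<And>S. S \<subseteq> I \<Longrightarrow> Q S \<Longrightarrow> \<exists>x\<in>X. P x S"
  shows "rprob I q Q \<le> (\<Sum>x\<in>X. rprob I q (P x))"
  using rprob_mono[OF assms(1-3), of Q "\<lambda>S. \<exists>x\<in>X. P x S"] rprob_Ex[OF assms(1-4), of P] assms by auto

lemma rprob_subset:
  assumes "finite I" "A \<subseteq> I"
  shows "rprob I q (\<lambda>S. A \<subseteq> S) = q ^ card A"
  unfolding rprob_rexp[OF assms(1)] using rexp_subset[OF assms] .

lemma rprob_split:
  assumes "finite I1" "finite I2" "I1 \<inter> I2 = {}"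
  shows "rprob (I1 \<union> I2) q P = (\<Sum>S1\<in>Pow I1. rweight I1 q S1 * rprob I2 q (\<lambda>S2. P (S1 \<union> S2)))"
  unfolding rprob_rexp[OF assms(2)] rprob_rexp[OF finite_UnI[OF assms(1,2)]] by (rule rexp_split[OF assms])

lemma rprob_marginal:
  assumes "finite I" "W \<subseteq> I"
  shows "rprob I q (\<lambda>S. P (S \<inter> W)) = rprob W q P"
  unfolding rprob_rexp[OF assms(1)] rprob_rexp[OF finite_subset[OF assms(2,1)]]
  using rexp_marginal[OF assms, of q "\<lambda>T. if P T then 1 else 0"] by simp

lemma rprob_le_1:
  assumes "finite I" "0 \<le> q" "q \<le> 1"
  shows "rprob I q P \<le> 1"
  using rprob_mono[OF assms, of P "\<lambda>_. True"] rprob_subset[OF assms(1), of "{}" q] by simp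

lemma rprob_False: "rprob I q (\<lambda>_. False) = 0"
  unfolding rprob_def by simp

lemma rprob_binomial_tail:
  assumes "finite W" "card W = N" "0 \<le> q" "q \<le> 1" "k \<le> N" "1 \<le> real N * q"
  shows "rprob W q (\<lambda>S. card S \<le> k) \<le> real (k+1) * (real N * q) ^ k * (1 - q) ^ (N - k)"
proof -
  let ?X = "{S\<in>Pow W. card S \<le> k}"
  have fX: "finite ?X" using assms(1) by simp
  have "rprob W q (\<lambda>S. card S \<le> k) = (\<Sum>S\<in>?X. q ^ card S * (1 - q) ^ (N - card S))"
    unfolding rprob_def rweight_def assms(2) ..
  also have "\<dots> \<le> (\<Sum>S\<in>?X. q ^ card S * (1 - q) ^ (N - k))"
    using assms by (intro sum_mono mult_left_mono power_decreasing) auto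
  also have "\<dots> = (\<Sum>j\<in>{..k}. \<Sum>S\<in>{S\<in>?X. card S = j}. q ^ card S * (1 - q) ^ (N - k))"
    by (rule sum.group[symmetric]) (use fX in auto)
  also have "\<dots> = (\<Sum>j\<in>{..k}. real (card {S\<in>?X. card S = j}) * (q ^ j * (1 - q) ^ (N - k)))"
    by (intro sum.cong refl) simp
  also have "\<dots> \<le> (\<Sum>j\<in>{..k}. (real N * q) ^ k * (1 - q) ^ (N - k))"
  proof (intro sum_mono)
    fix j assume j: "j \<in> {..k}"
    have "{S\<in>?X. card S = j} = {S. S \<subseteq> W \<and> card S = j}" using j by auto
    then have "card {S\<in>?X. card S = j} = N choose j" using n_subsets[OF assms(1), of j] assms(2) by simp
    also have "\<dots> \<le> N ^ j" using j assms(5) by (intro binomial_le_pow) auto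
    finally have c0: "card {S\<in>?X. card S = j} \<le> N ^ j" .
    have c: "real (card {S\<in>?X. card S = j}) \<le> real N ^ j"
      using of_nat_mono[OF c0, where 'a=real] by simp
    have "real (card {S\<in>?X. card S = j}) * (q ^ j * (1 - q) ^ (N - k)) \<le> real N ^ j * (q ^ j * (1 - q) ^ (N - k))"
      using c assms by (intro mult_right_mono) auto
    also have "\<dots> = (real N * q) ^ j * (1 - q) ^ (N - k)" by (simp add: power_mult_distrib)
    also have "\<dots> \<le> (real N * q) ^ k * (1 - q) ^ (N - k)"
      using j assms by (intro mult_right_mono power_increasing) auto
    finally show "real (card {S\<in>?X. card S = j}) * (q ^ j * (1 - q) ^ (N - k)) \<le> (real N * q) ^ k * (1 - q) ^ (N - k)" .
  qed
  also have "\<dots> = real (k+1) * (real N * q) ^ k * (1 - q) ^ (N - k)" by simp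
  finally show ?thesis .
qed

lemma card_as_sum:
  assumes "finite W" "S \<subseteq> W"
  shows "real (card S) = (\<Sum>x\<in>W. if {x} \<subseteq> S then 1 else 0)"
proof -
  have "real (card S) = (\<Sum>x\<in>W. if x \<in> S then 1 else 0)"
    using assms by (simp add: sum.If_cases Int_absorb1)
  then show ?thesis by simp
qed

lemma rexp_card:
  assumes "finite W" "card W = N"
  shows "rexp W q (\<lambda>S. real (card S)) = real N * q"
proof -
  have "rexp W q (\<lambda>S. real (card S)) = rexp W q (\<lambda>S. \<Sum>x\<in>W. if {x} \<subseteq> S then 1 else 0)"
    unfolding rexp_def using assms by (intro sum.cong refl) (simp add: card_as_sum[OF assms(1)])
  also have "\<dots> = (\<Sum>x\<in>W. q)" unfolding rexp_sum
  proof (intro sum.cong refl)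
    fix x assume "x \<in> W"
    then show "rexp W q (\<lambda>S. if {x} \<subseteq> S then 1 else 0) = q" using rexp_subset[OF assms(1), of "{x}" q] by simp
  qed
  finally show ?thesis using assms by simp
qed

lemma rexp_card_sq:
  assumes "finite W" "card W = N"
  shows "rexp W q (\<lambda>S. real (card S) ^ 2) = real N * q + real N * (real N - 1) * q ^ 2"
proof -
  have "rexp W q (\<lambda>S. real (card S) ^ 2) = rexp W q (\<lambda>S. \<Sum>x\<in>W. \<Sum>y\<in>W. if {x, y} \<subseteq> S then 1 else 0)"
  proof (unfold rexp_def, intro sum.cong refl arg_cong2[where f="(*)"])
    fix S assume "S \<in> Pow W"
    then have "real (card S) ^ 2 = (\<Sum>x\<in>W. if {x} \<subseteq> S then 1 else 0) * (\<Sum>y\<in>W. if {y} \<subseteq> S then 1 else 0)"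
      using card_as_sum[OF assms(1)] by (simp add: power2_eq_square)
    also have "\<dots> = (\<Sum>x\<in>W. \<Sum>y\<in>W. (if {x} \<subseteq> S then 1 else 0) * (if {y} \<subseteq> S then 1 else (0::real)))"
      by (rule sum_product)
    also have "\<dots> = (\<Sum>x\<in>W. \<Sum>y\<in>W. if {x, y} \<subseteq> S then 1 else 0)"
      by (intro sum.cong refl) auto
    finally show "real (card S) ^ 2 = (\<Sum>x\<in>W. \<Sum>y\<in>W. if {x, y} \<subseteq> S then 1 else 0)" .
  qed
  also have "\<dots> = (\<Sum>x\<in>W. \<Sum>y\<in>W. q ^ card {x, y})"
    unfolding rexp_sum using assms by (intro sum.cong refl rexp_subset) auto
  also have "\<dots> = (\<Sum>x\<in>W. q + (real N - 1) * q ^ 2)"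
  proof (intro sum.cong refl)
    fix x assume x: "x \<in> W"
    have "(\<Sum>y\<in>W. q ^ card {x, y}) = q ^ card {x, x} + (\<Sum>y\<in>W - {x}. q ^ card {x, y})"
      using x assms by (simp add: sum.remove)
    also have "(\<Sum>y\<in>W - {x}. q ^ card {x, y}) = (\<Sum>y\<in>W - {x}. q ^ 2)"
      by (intro sum.cong) (auto simp: power2_eq_square)
    moreover have "0 < card W" using x assms(1) by (auto simp: card_gt_0_iff)
    then have "1 \<le> N" using assms(2) by simp
    ultimately show "(\<Sum>y\<in>W. q ^ card {x, y}) = q + (real N - 1) * q ^ 2"
      using x assms by (simp add: card_Diff_singleton of_nat_diff)
  qed
  finally show ?thesis using assms by (simp add: algebra_simps power2_eq_square)
qed

lemma rprob_chebyshev: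
  assumes "finite W" "card W = N" "0 \<le> q" "q \<le> 1" "0 < real N * q"
  shows "rprob W q (\<lambda>S. real (card S) < real N * q / 2) \<le> 4 / (real N * q)"
proof -
  let ?m = "real N * q"
  have "rprob W q (\<lambda>S. real (card S) < ?m / 2) \<le> rexp W q (\<lambda>S. (4 / ?m ^ 2) * (real (card S) ^ 2 + (- 2 * ?m) * real (card S) + ?m ^ 2))"
  proof (intro rprob_markov assms(1,3,4))
    fix S
    have eq: "(4 / ?m ^ 2) * (real (card S) ^ 2 + (- 2 * ?m) * real (card S) + ?m ^ 2) = (4 / ?m ^ 2) * (real (card S) - ?m) ^ 2"
      by (simp add: power2_eq_square algebra_simps)
    show "0 \<le> (4 / ?m ^ 2) * (real (card S) ^ 2 + (- 2 * ?m) * real (card S) + ?m ^ 2)" unfolding eq by simp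
    assume "real (card S) < ?m / 2"
    then have "?m / 2 \<le> ?m - real (card S)" by linarith
    then have "(?m / 2) ^ 2 \<le> (?m - real (card S)) ^ 2"
      using assms(5) by (intro power_mono) auto
    then have h: "(?m / 2) ^ 2 \<le> (real (card S) - ?m) ^ 2" by (simp add: power2_commute)
    have "?m \<noteq> 0" using assms(5) by linarith
    then have one: "4 / ?m ^ 2 * (?m / 2) ^ 2 = 1" by (simp add: power2_eq_square field_simps)
    have "4 / ?m ^ 2 * (?m / 2) ^ 2 \<le> (4 / ?m ^ 2) * (real (card S) - ?m) ^ 2"
      by (rule mult_left_mono[OF h]) simp
    then have "1 \<le> (4 / ?m ^ 2) * (real (card S) - ?m) ^ 2" unfolding one .
    then show "1 \<le> (4 / ?m ^ 2) * (real (card S) ^ 2 + (- 2 * ?m) * real (card S) + ?m ^ 2)" unfolding eq .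
  qed
  also have "\<dots> = (4 / ?m ^ 2) * (rexp W q (\<lambda>S. real (card S) ^ 2) + (- 2 * ?m) * rexp W q (\<lambda>S. real (card S)) + ?m ^ 2)"
    by (simp only: rexp_cmult rexp_add rexp_const[OF assms(1)])
  also have "\<dots> = (4 / ?m ^ 2) * (?m * (1 - q))"
    unfolding rexp_card_sq[OF assms(1,2)] rexp_card[OF assms(1,2)] by (simp add: algebra_simps power2_eq_square)
  also have "\<dots> = 4 * (1 - q) / ?m"
  proof -
    have "q \<noteq> 0" "real N \<noteq> 0" using assms(5) by (auto simp: zero_less_mult_iff)
    then show ?thesis by (simp add: power2_eq_square field_simps)
  qed
  also have "\<dots> \<le> 4 / ?m"
    using assms by (intro divide_right_mono) auto
  finally show ?thesis .
qed

lemma card_le_image_plus_coll: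
  assumes "finite P"
  shows "card P \<le> card (f ` P) + card {(x,y). x \<in> P \<and> y \<in> P \<and> x \<noteq> y \<and> f x = f y}"
proof -
  define g where "g = inv_into P f"
  define Rp where "Rp = g ` (f ` P)"
  have Rp_sub: "Rp \<subseteq> P" unfolding Rp_def g_def by (auto intro: inv_into_into)
  have c1: "card Rp \<le> card (f ` P)" unfolding Rp_def by (rule card_image_le) (use assms in auto)
  have "inj_on (\<lambda>x. (x, g (f x))) (P - Rp)" by (rule inj_onI) auto
  moreover have "(\<lambda>x. (x, g (f x))) ` (P - Rp) \<subseteq> {(x,y). x \<in> P \<and> y \<in> P \<and> x \<noteq> y \<and> f x = f y}"
  proof
    fix z assume "z \<in> (\<lambda>x. (x, g (f x))) ` (P - Rp)"
    then obtain x where x: "x \<in> P" "x \<notin> Rp" "z = (x, g (f x))" by auto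
    have "g (f x) \<in> P" unfolding g_def using x by (auto intro: inv_into_into)
    moreover have "f (g (f x)) = f x" unfolding g_def using x by (auto intro: f_inv_into_f)
    moreover have "g (f x) \<in> Rp" unfolding Rp_def using x by auto
    ultimately show "z \<in> {(x,y). x \<in> P \<and> y \<in> P \<and> x \<noteq> y \<and> f x = f y}" using x by auto
  qed
  moreover have "finite {(x,y). x \<in> P \<and> y \<in> P \<and> x \<noteq> y \<and> f x = f y}"
    by (rule finite_subset[of _ "P \<times> P"]) (use assms in auto)
  ultimately have c2: "card (P - Rp) \<le> card {(x,y). x \<in> P \<and> y \<in> P \<and> x \<noteq> y \<and> f x = f y}"
    using card_inj_on_le by blast
  have "card P = card Rp + card (P - Rp)"
    using card_Diff_subset[OF finite_subset[OF Rp_sub assms] Rp_sub] card_mono[OF assms Rp_sub] by simp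
  then show ?thesis using c1 c2 by linarith
qed

definition sumsetAB :: "int set \<Rightarrow> int set \<Rightarrow> int set \<Rightarrow> int set" where
  "sumsetAB A B S = (\<lambda>(a,b). a + b) ` ((S \<inter> A) \<times> (S \<inter> B))"

definition coll :: "int set \<Rightarrow> int set \<Rightarrow> int set \<Rightarrow> nat" where
  "coll A B S = card {(x,y). x \<in> (S \<inter> A) \<times> (S \<inter> B) \<and> y \<in> (S \<inter> A) \<times> (S \<inter> B) \<and> x \<noteq> y \<and>
      (\<lambda>(a,b). a + b) x = (\<lambda>(a,b). a + b) y}"

lemma card_sums:
  assumes "finite A" "finite B"
  shows "real (card (S \<inter> A)) * real (card (S \<inter> B)) - real (coll A B S) \<le> real (card (sumsetAB A B S))"
proof -
  have "finite ((S \<inter> A) \<times> (S \<inter> B))" using assms by auto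
  from card_le_image_plus_coll[OF this, of "\<lambda>(a,b). a + b"]
  have "card ((S \<inter> A) \<times> (S \<inter> B)) \<le> card (sumsetAB A B S) + coll A B S"
    unfolding sumsetAB_def coll_def by simp
  then have h: "card (S \<inter> A) * card (S \<inter> B) \<le> card (sumsetAB A B S) + coll A B S"
    by (simp add: card_cartesian_product)
  have "real (card (S \<inter> A) * card (S \<inter> B)) \<le> real (card (sumsetAB A B S) + coll A B S)"
    using h by (simp only: of_nat_le_iff)
  then show ?thesis by simp
qed

lemma card_filter_sum:
  "finite Q \<Longrightarrow> real (card {z\<in>Q. P z}) = (\<Sum>z\<in>Q. if P z then 1 else 0)"
  by (simp only: real_of_card sum.inter_filter)

definition Q0 :: "int set \<Rightarrow> int set \<Rightarrow> ((int \<times> int) \<times> (int \<times> int)) set" where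
  "Q0 A B = {(x,y). x \<in> A \<times> B \<and> y \<in> A \<times> B \<and> x \<noteq> y \<and> fst x + snd x = fst y + snd y}"

definition elems :: "(int \<times> int) \<times> (int \<times> int) \<Rightarrow> int set" where
  "elems z = {fst (fst z), snd (fst z), fst (snd z), snd (snd z)}"

lemma coll_eq:
  "coll A B S = card {z \<in> Q0 A B. elems z \<subseteq> S}"
proof -
  have "{(x,y). x \<in> (S \<inter> A) \<times> (S \<inter> B) \<and> y \<in> (S \<inter> A) \<times> (S \<inter> B) \<and> x \<noteq> y \<and>
      (\<lambda>(a,b). a + b) x = (\<lambda>(a,b). a + b) y} = {z \<in> Q0 A B. elems z \<subseteq> S}"
  proof (rule set_eqI)
    fix z :: "(int \<times> int) \<times> (int \<times> int)"
    obtain a b a' b' where z: "z = ((a,b),(a',b'))" by (metis prod.collapse)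
    show "z \<in> {(x,y). x \<in> (S \<inter> A) \<times> (S \<inter> B) \<and> y \<in> (S \<inter> A) \<times> (S \<inter> B) \<and> x \<noteq> y \<and>
      (\<lambda>(a,b). a + b) x = (\<lambda>(a,b). a + b) y} \<longleftrightarrow> z \<in> {z \<in> Q0 A B. elems z \<subseteq> S}"
      unfolding z Q0_def elems_def by auto
  qed
  then show ?thesis unfolding coll_def by simp
qed

lemma finite_Q0: "finite A \<Longrightarrow> finite B \<Longrightarrow> finite (Q0 A B)"
  unfolding Q0_def by (rule finite_subset[of _ "(A \<times> B) \<times> (A \<times> B)"]) auto

lemma card_Q0:
  assumes "finite A" "finite B" "card A = M" "card B = M"
  shows "card (Q0 A B) \<le> M ^ 3"
proof -
  have "inj_on (\<lambda>z. (fst (fst z), snd (fst z), fst (snd z))) (Q0 A B)"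
  proof (rule inj_onI)
    fix z w assume "z \<in> Q0 A B" "w \<in> Q0 A B" "(fst (fst z), snd (fst z), fst (snd z)) = (fst (fst w), snd (fst w), fst (snd w))"
    then show "z = w" unfolding Q0_def by (cases z, cases w) auto
  qed
  moreover have "(\<lambda>z. (fst (fst z), snd (fst z), fst (snd z))) ` (Q0 A B) \<subseteq> A \<times> B \<times> A"
    unfolding Q0_def by auto
  ultimately have "card (Q0 A B) \<le> card (A \<times> B \<times> A)"
    by (rule card_inj_on_le) (use assms in auto)
  also have "\<dots> = M ^ 3" using assms by (simp add: card_cartesian_product power3_eq_cube)
  finally show ?thesis .
qed

lemma card_elems:
  assumes "A \<inter> B = {}" "z \<in> Q0 A B"
  shows "card (elems z) = 4"
proof -
  obtain a b a' b' where z: "z = ((a,b),(a',b'))" by (cases z) auto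
  have h: "a \<in> A" "b \<in> B" "a' \<in> A" "b' \<in> B" "(a,b) \<noteq> (a',b')" "a + b = a' + b'"
    using assms(2) unfolding z Q0_def by auto
  have "a \<noteq> a'" using h by auto
  moreover have "b \<noteq> b'" using h by auto
  moreover have "a \<noteq> b" "a \<noteq> b'" "a' \<noteq> b" "a' \<noteq> b'" using h assms(1) by auto
  ultimately show ?thesis unfolding z elems_def by simp
qed

lemma rexp_coll:
  assumes "finite I" "A \<subseteq> I" "B \<subseteq> I" "A \<inter> B = {}" "card A = M" "card B = M" "0 \<le> q" "q \<le> 1"
  shows "rexp I q (\<lambda>S. real (coll A B S)) \<le> real M ^ 3 * q ^ 4"
proof -
  have fA: "finite A" "finite B" using assms finite_subset by blast+
  have "rexp I q (\<lambda>S. real (coll A B S)) = rexp I q (\<lambda>S. \<Sum>z\<in>Q0 A B. if elems z \<subseteq> S then 1 else 0)"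
    unfolding coll_eq card_filter_sum[OF finite_Q0[OF fA]] ..
  also have "\<dots> = (\<Sum>z\<in>Q0 A B. q ^ 4)"
    unfolding rexp_sum
  proof (intro sum.cong refl)
    fix z assume z: "z \<in> Q0 A B"
    have "elems z \<subseteq> I" using z assms(2,3) unfolding Q0_def elems_def by auto
    then show "rexp I q (\<lambda>S. if elems z \<subseteq> S then 1 else 0) = q ^ 4"
      using rexp_subset[OF assms(1)] card_elems[OF assms(4) z] by simp
  qed
  also have "\<dots> = real (card (Q0 A B)) * q ^ 4" by simp
  also have "\<dots> \<le> real M ^ 3 * q ^ 4"
    using card_Q0[OF fA assms(5,6)] assms(7) by (intro mult_right_mono) (auto simp flip: of_nat_power)
  finally show ?thesis .
qed

lemma triples_lower:
  assumes "finite I" "A \<subseteq> I" "B \<subseteq> I" "A \<inter> B = {}"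
    and geo: "\<And>a b. a \<in> A \<Longrightarrow> b \<in> B \<Longrightarrow> n - a - b \<in> I - (A \<union> B)"
    and S1: "S1 \<subseteq> A \<union> B" and S2: "S2 \<subseteq> I - (A \<union> B)"
    and W: "W \<subseteq> (\<lambda>s. n - s) ` sumsetAB A B S1"
  shows "card (S2 \<inter> W) \<le> card {T \<in> triples I n. T \<subseteq> S1 \<union> S2}"
proof -
  define pk where "pk c = (SOME x. x \<in> (S1 \<inter> A) \<times> (S1 \<inter> B) \<and> fst x + snd x = n - c)" for c
  define f where "f c = {fst (pk c), snd (pk c), c}" for c
  have pk: "pk c \<in> (S1 \<inter> A) \<times> (S1 \<inter> B) \<and> fst (pk c) + snd (pk c) = n - c" if "c \<in> W" for c
  proof -
    from that W obtain s where "s \<in> sumsetAB A B S1" "c = n - s" by auto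
    then obtain a b where "(a,b) \<in> (S1 \<inter> A) \<times> (S1 \<inter> B)" "fst (a,b) + snd (a,b) = n - c"
      unfolding sumsetAB_def by auto
    then have "\<exists>x. x \<in> (S1 \<inter> A) \<times> (S1 \<inter> B) \<and> fst x + snd x = n - c" by blast
    then show ?thesis unfolding pk_def by (rule someI_ex)
  qed
  have cI2: "c \<in> I - (A \<union> B)" if "c \<in> W" for c
  proof -
    have "n - fst (pk c) - snd (pk c) \<in> I - (A \<union> B)" using pk[OF that] geo by auto
    moreover have "n - fst (pk c) - snd (pk c) = c" using pk[OF that] by simp
    ultimately show ?thesis by simp
  qed
  have "inj_on f (S2 \<inter> W)"
  proof (rule inj_onI)
    fix c c' assume c: "c \<in> S2 \<inter> W" and c': "c' \<in> S2 \<inter> W" and e: "f c = f c'"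
    have "c \<in> f c'" using e unfolding f_def by auto
    moreover have "fst (pk c') \<in> A" "snd (pk c') \<in> B" using pk[of c'] c' by (auto simp: mem_Times_iff)
    moreover have "c \<notin> A \<union> B" using cI2 c by auto
    ultimately show "c = c'" unfolding f_def by auto
  qed
  moreover have "f ` (S2 \<inter> W) \<subseteq> {T \<in> triples I n. T \<subseteq> S1 \<union> S2}"
  proof
    fix T assume "T \<in> f ` (S2 \<inter> W)"
    then obtain c where c: "c \<in> S2" "c \<in> W" "T = f c" by auto
    obtain a b where ab: "pk c = (a,b)" by (cases "pk c")
    have h: "a \<in> S1 \<inter> A" "b \<in> S1 \<inter> B" "a + b = n - c" using pk[OF c(2)] ab by auto
    have cc: "c \<in> I - (A \<union> B)" using cI2 c by auto
    have T: "T = {a, b, c}" using c(3) ab unfolding f_def by simp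
    have d: "a \<noteq> b" "a \<noteq> c" "b \<noteq> c" using h cc assms(4) by auto
    have "T \<subseteq> I" using T h cc assms(2,3) by auto
    moreover have "card T = 3" using T d by simp
    moreover have "\<Sum>T = n" using T d h by simp
    moreover have "T \<subseteq> S1 \<union> S2" using T h c by auto
    ultimately show "T \<in> {T \<in> triples I n. T \<subseteq> S1 \<union> S2}" unfolding triples_def by simp
  qed
  moreover have "finite {T \<in> triples I n. T \<subseteq> S1 \<union> S2}"
    by (rule finite_subset[of _ "Pow I"]) (use assms(1) in \<open>auto simp: triples_def\<close>)
  ultimately show ?thesis using card_inj_on_le by blast
qed

lemma partD_config:
  fixes I A B Nset :: "int set"
  assumes fI: "finite I" and AI: "A \<subseteq> I" and BI: "B \<subseteq> I" and AB: "A \<inter> B = {}"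
    and cA: "card A = M" and cB: "card B = M"
    and q0: "0 \<le> q" and q1: "q \<le> 1" and qM: "0 < q * M" and tau: "0 < \<tau>" and fN: "finite Nset"
    and geo: "\<And>n a b. n \<in> Nset \<Longrightarrow> a \<in> A \<Longrightarrow> b \<in> B \<Longrightarrow> n - a - b \<in> I - (A \<union> B)"
    and N0: "real N0 \<le> (q * M / 2)^2 - \<tau>" and kN0: "k \<le> N0" and N0q: "1 \<le> real N0 * q"
  shows "rprob I q (\<lambda>R. \<exists>n\<in>Nset. card {T \<in> triples I n. T \<subseteq> R} \<le> k)
        \<le> 8 / (q * M) + real M ^ 3 * q ^ 4 / \<tau> + real (card Nset) * (real (k+1) * (real N0 * q) ^ k * (1 - q) ^ (N0 - k))"
proof -
  define good where "good S \<longleftrightarrow> q * M / 2 \<le> real (card (S \<inter> A)) \<and> q * M / 2 \<le> real (card (S \<inter> B)) \<and> real (coll A B S) \<le> \<tau>" for S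
  define bb where "bb = real (k+1) * (real N0 * q) ^ k * (1 - q) ^ (N0 - k)"
  have bb0: "0 \<le> bb" unfolding bb_def using q0 q1 by simp
  have fA: "finite A" "finite B" using fI AI BI finite_subset by blast+
  let ?E = "\<lambda>R. \<exists>n\<in>Nset. card {T \<in> triples I n. T \<subseteq> R} \<le> k"
  have step1: "rprob I q ?E \<le> rprob I q (\<lambda>R. (real (card (R \<inter> A)) < q * M / 2 \<or> real (card (R \<inter> B)) < q * M / 2)
        \<or> (\<tau> < real (coll A B R) \<or> (good R \<and> ?E R)))"
    by (rule rprob_mono[OF fI q0 q1]) (auto simp: good_def)
  also have "\<dots> \<le> (rprob I q (\<lambda>R. real (card (R \<inter> A)) < q * M / 2) + rprob I q (\<lambda>R. real (card (R \<inter> B)) < q * M / 2))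
       + (rprob I q (\<lambda>R. \<tau> < real (coll A B R)) + rprob I q (\<lambda>R. good R \<and> ?E R))"
    by (intro order.trans[OF rprob_disj[OF fI q0 q1]] add_mono rprob_disj[OF fI q0 q1])
  finally have s1: "rprob I q ?E \<le> \<dots>" .
  have tA: "rprob I q (\<lambda>R. real (card (R \<inter> X)) < q * M / 2) \<le> 4 / (q * M)" if X: "X \<subseteq> I" "card X = M" for X
  proof -
    have "rprob I q (\<lambda>R. real (card (R \<inter> X)) < q * M / 2) = rprob X q (\<lambda>S. real (card S) < real M * q / 2)"
      using rprob_marginal[OF fI X(1), of q "\<lambda>S. real (card S) < real M * q / 2"] by (simp add: mult.commute)
    also have "\<dots> \<le> 4 / (real M * q)"
      by (rule rprob_chebyshev) (use X fI finite_subset q0 q1 qM in \<open>auto simp: mult.commute\<close>)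
    finally show ?thesis by (simp add: mult.commute)
  qed
  have tC: "rprob I q (\<lambda>R. \<tau> < real (coll A B R)) \<le> real M ^ 3 * q ^ 4 / \<tau>"
  proof -
    have "rprob I q (\<lambda>R. \<tau> < real (coll A B R)) \<le> rexp I q (\<lambda>R. (1 / \<tau>) * real (coll A B R))"
      by (rule rprob_markov[OF fI q0 q1]) (use tau in auto)
    also have "\<dots> = (1 / \<tau>) * rexp I q (\<lambda>R. real (coll A B R))" by (rule rexp_cmult)
    also have "\<dots> \<le> (1 / \<tau>) * (real M ^ 3 * q ^ 4)"
      using rexp_coll[OF fI AI BI AB cA cB q0 q1] tau by (intro mult_left_mono) auto
    finally show ?thesis by simp
  qed
  define I1 where "I1 = A \<union> B"
  define I2 where "I2 = I - I1"
  have fI12: "finite I1" "finite I2" "I1 \<inter> I2 = {}" using fI fA unfolding I1_def I2_def by auto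
  have II: "I = I1 \<union> I2" using AI BI unfolding I1_def I2_def by auto
  have inner: "rprob I2 q (\<lambda>S2. good (S1 \<union> S2) \<and> ?E (S1 \<union> S2)) \<le> real (card Nset) * bb"
    if S1: "S1 \<subseteq> I1" for S1
  proof (cases "good S1")
    case False
    have "rprob I2 q (\<lambda>S2. good (S1 \<union> S2) \<and> ?E (S1 \<union> S2)) \<le> rprob I2 q (\<lambda>_. False)"
    proof (rule rprob_mono[OF fI12(2) q0 q1])
      fix S2 assume "S2 \<subseteq> I2" "good (S1 \<union> S2) \<and> ?E (S1 \<union> S2)"
      moreover have "(S1 \<union> S2) \<inter> A = S1 \<inter> A" "(S1 \<union> S2) \<inter> B = S1 \<inter> B"
        using \<open>S2 \<subseteq> I2\<close> unfolding I2_def I1_def by auto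
      moreover have "coll A B (S1 \<union> S2) = coll A B S1" unfolding coll_def using calculation(3,4) by simp
      ultimately show False using False unfolding good_def by simp
    qed
    moreover have "0 \<le> real (card Nset) * bb" using bb0 by simp
    ultimately show ?thesis using rprob_False[of I2 q] by linarith
  next
    case True
    define Cand where "Cand n = (\<lambda>s. n - s) ` sumsetAB A B S1" for n
    have cardCand: "N0 \<le> card (Cand n)" for n
    proof -
      have "card (Cand n) = card (sumsetAB A B S1)"
        unfolding Cand_def by (rule card_image) (simp add: inj_on_def)
      moreover have "(q * M / 2) ^ 2 - \<tau> \<le> real (card (sumsetAB A B S1))"
      proof -
        have "(q * M / 2) ^ 2 \<le> real (card (S1 \<inter> A)) * real (card (S1 \<inter> B))"
          using True qM unfolding good_def power2_eq_square by (intro mult_mono) auto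
        then show ?thesis using card_sums[OF fA, of S1] True unfolding good_def by linarith
      qed
      ultimately show ?thesis using N0 by linarith
    qed
    have fCand: "finite (Cand n)" for n unfolding Cand_def sumsetAB_def using fA by auto
    define W where "W n = (SOME W. W \<subseteq> Cand n \<and> card W = N0)" for n
    have W: "W n \<subseteq> Cand n \<and> card (W n) = N0" for n
    proof -
      obtain W' where "W' \<subseteq> Cand n" "card W' = N0" using obtain_subset_with_card_n[OF cardCand[of n]] by blast
      then show ?thesis unfolding W_def by (metis (mono_tags, lifting) someI)
    qed
    have geo': "\<And>a b. a \<in> A \<Longrightarrow> b \<in> B \<Longrightarrow> n - a - b \<in> I - (A \<union> B)" if "n \<in> Nset" for n
      using geo that by blast
    have "rprob I2 q (\<lambda>S2. good (S1 \<union> S2) \<and> ?E (S1 \<union> S2)) \<le> (\<Sum>n\<in>Nset. rprob I2 q (\<lambda>S2. card (S2 \<inter> W n) \<le> k))"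
    proof (rule rprob_le_Ex[OF fI12(2) q0 q1 fN])
      fix S2 assume S2: "S2 \<subseteq> I2" and "good (S1 \<union> S2) \<and> ?E (S1 \<union> S2)"
      then obtain n where n: "n \<in> Nset" "card {T \<in> triples I n. T \<subseteq> S1 \<union> S2} \<le> k" by blast
      have "card (S2 \<inter> W n) \<le> card {T \<in> triples I n. T \<subseteq> S1 \<union> S2}"
        by (rule triples_lower[OF fI AI BI AB geo'[OF n(1)]])
           (use S1 S2 W[of n] in \<open>auto simp: I1_def I2_def Cand_def\<close>)
      then show "\<exists>n\<in>Nset. card (S2 \<inter> W n) \<le> k" using n by force
    qed
    also have "\<dots> \<le> (\<Sum>n\<in>Nset. bb)"
    proof (intro sum_mono)
      fix n assume "n \<in> Nset"
      have WI2: "W n \<subseteq> I2"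
      proof
        fix c assume "c \<in> W n"
        then obtain s where s: "s \<in> sumsetAB A B S1" "c = n - s" using W[of n] unfolding Cand_def by auto
        then obtain a b where "a \<in> A" "b \<in> B" "s = a + b" unfolding sumsetAB_def by auto
        then have "c = n - a - b" using s by simp
        then show "c \<in> I2" using geo[OF \<open>n \<in> Nset\<close> \<open>a \<in> A\<close> \<open>b \<in> B\<close>] unfolding I2_def I1_def by simp
      qed
      have "rprob I2 q (\<lambda>S2. card (S2 \<inter> W n) \<le> k) = rprob (W n) q (\<lambda>S. card S \<le> k)"
        by (rule rprob_marginal[OF fI12(2) WI2])
      also have "\<dots> \<le> bb" unfolding bb_def
        by (rule rprob_binomial_tail) (use W[of n] fCand[of n] finite_subset q0 q1 kN0 N0q in auto)
      finally show "rprob I2 q (\<lambda>S2. card (S2 \<inter> W n) \<le> k) \<le> bb" .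
    qed
    finally show ?thesis by simp
  qed
  have tD: "rprob I q (\<lambda>R. good R \<and> ?E R) \<le> real (card Nset) * bb"
  proof -
    have "rprob I q (\<lambda>R. good R \<and> ?E R) = (\<Sum>S1\<in>Pow I1. rweight I1 q S1 * rprob I2 q (\<lambda>S2. good (S1 \<union> S2) \<and> ?E (S1 \<union> S2)))"
      unfolding II by (rule rprob_split[OF fI12])
    also have "\<dots> \<le> (\<Sum>S1\<in>Pow I1. rweight I1 q S1 * (real (card Nset) * bb))"
      using inner q0 q1 by (intro sum_mono mult_left_mono) (auto simp: rweight_nonneg)
    also have "\<dots> = real (card Nset) * bb"
      using rweight_sum[OF fI12(1), of q] by (simp add: sum_distrib_right[symmetric])
    finally show ?thesis .
  qed
  have "rprob I q ?E \<le> (4 / (q * M) + 4 / (q * M)) + (real M ^ 3 * q ^ 4 / \<tau> + real (card Nset) * bb)"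
    using s1 tA[OF AI cA] tA[OF BI cB] tC tD by linarith
  then show ?thesis unfolding bb_def by simp
qed

lemma conv_RR:
  assumes "finite R"
  shows "conv (indicator R) (indicator R) n = real (card {a\<in>R. n - a \<in> R})"
proof -
  have "conv (indicator R) (indicator R) n = infsum (\<lambda>a. if n - a \<in> R then 1 else 0) R"
    unfolding conv_def by (rule infsum_cong_neutral) (auto simp: indicator_def)
  also have "\<dots> = (\<Sum>a\<in>R. if n - a \<in> R then 1 else 0)" using assms by simp
  also have "\<dots> = real (card {a\<in>R. n - a \<in> R})"
    by (simp only: real_of_card sum.inter_filter[OF assms])
  finally show ?thesis .
qed

lemma conv_RmR:
  assumes "finite R"
  shows "conv (indicator R) (indicator (uminus ` R)) n = real (card {a\<in>R. a - n \<in> R})"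
proof -
  have e: "(n - a \<in> uminus ` R) \<longleftrightarrow> (a - n \<in> R)" for a
  proof
    assume "n - a \<in> uminus ` R"
    then obtain x where "x \<in> R" "n - a = - x" by auto
    moreover then have "a - n = x" by linarith
    ultimately show "a - n \<in> R" by simp
  next
    assume "a - n \<in> R"
    then have "- (a - n) \<in> uminus ` R" by blast
    then show "n - a \<in> uminus ` R" by simp
  qed
  have "conv (indicator R) (indicator (uminus ` R)) n = infsum (\<lambda>a. if a - n \<in> R then 1 else 0) R"
    unfolding conv_def by (rule infsum_cong_neutral) (auto simp: indicator_def e)
  also have "\<dots> = (\<Sum>a\<in>R. if a - n \<in> R then 1 else 0)" using assms by simp
  also have "\<dots> = real (card {a\<in>R. a - n \<in> R})"
    by (simp only: real_of_card sum.inter_filter[OF assms])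
  finally show ?thesis .
qed

lemma rprob_cond_subset:
  assumes "finite I" "0 \<le> q" "c \<Longrightarrow> A \<subseteq> I \<and> card A = j"
  shows "rprob I q (\<lambda>R. A \<subseteq> R \<and> c) \<le> q ^ j"
proof (cases c)
  case True
  then show ?thesis using rprob_subset[OF assms(1), of A q] assms(3) by simp
next
  case False
  then show ?thesis using rprob_False[of I q] assms(2) by simp
qed

lemma card_subsets4:
  assumes "finite I" "card I = L"
  shows "card {D. D \<subseteq> I \<and> card D = 4} \<le> L ^ 4"
  using n_subsets[OF assms(1), of 4] assms(2) binomial_le_pow[of 4 L]
  by (cases "4 \<le> L") (auto simp: binomial_eq_0)

lemma partB:
  fixes H :: int
  assumes I: "I = {1..H}" and L: "card I = L" and q0: "0 \<le> q" and q1: "q \<le> 1"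
  shows "rprob I q (\<lambda>R. \<exists>n. conv (indicator R) (indicator R) n \<ge> 9) \<le> real (nat (2*H+1)) * real L ^ 4 * q ^ 8"
proof -
  have fI: "finite I" using I by simp
  define X where "X = {0..2*H} \<times> {D. D \<subseteq> I \<and> card D = 4}"
  let ?U = "\<lambda>(n::int) D. D \<union> (\<lambda>a. n - a) ` D"
  have fX: "finite X" unfolding X_def using fI by simp
  have "rprob I q (\<lambda>R. \<exists>n. conv (indicator R) (indicator R) n \<ge> 9)
      \<le> (\<Sum>x\<in>X. rprob I q (\<lambda>R. ?U (fst x) (snd x) \<subseteq> R \<and> (?U (fst x) (snd x) \<subseteq> I \<and> card (?U (fst x) (snd x)) = 8)))"
  proof (rule rprob_le_Ex[OF fI q0 q1 fX])
    fix R assume RI: "R \<subseteq> I" and "\<exists>n. conv (indicator R) (indicator R) n \<ge> 9"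
    then obtain n where n: "conv (indicator R) (indicator R) n \<ge> 9" by blast
    have fR: "finite R" using RI fI finite_subset by blast
    define E where "E = {a\<in>R. n - a \<in> R}"
    define D0 where "D0 = {a\<in>E. 2 * a < n}"
    have cE: "9 \<le> card E" using n conv_RR[OF fR, of n] unfolding E_def by simp
    have fE: "finite E" "finite D0" using fR unfolding E_def D0_def by auto
    have "E \<subseteq> D0 \<union> (\<lambda>a. n - a) ` D0 \<union> {n div 2}"
    proof
      fix a assume a: "a \<in> E"
      show "a \<in> D0 \<union> (\<lambda>a. n - a) ` D0 \<union> {n div 2}"
      proof (cases "2 * a < n")
        case True then show ?thesis using a unfolding D0_def by auto
      next
        case False
        show ?thesis
        proof (cases "2 * a = n")
          case True then show ?thesis by auto
        next
          case False2: False
          have "n - a \<in> D0" using a False False2 unfolding D0_def E_def by auto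
          then have "n - (n - a) \<in> (\<lambda>a. n - a) ` D0" by blast
          then show ?thesis by simp
        qed
      qed
    qed
    then have "card E \<le> card (D0 \<union> (\<lambda>a. n - a) ` D0 \<union> {n div 2})" using fE by (intro card_mono) auto
    also have "\<dots> \<le> card D0 + card ((\<lambda>a. n - a) ` D0) + 1"
    proof -
      have "card (D0 \<union> (\<lambda>a. n - a) ` D0 \<union> {n div 2}) \<le> card (D0 \<union> (\<lambda>a. n - a) ` D0) + card {n div 2}"
        by (rule card_Un_le)
      moreover have "card (D0 \<union> (\<lambda>a. n - a) ` D0) \<le> card D0 + card ((\<lambda>a. n - a) ` D0)"
        by (rule card_Un_le)
      ultimately show ?thesis by simp
    qed
    also have "\<dots> \<le> card D0 + card D0 + 1" using card_image_le[OF fE(2)] by simp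
    finally have c4: "4 \<le> card D0" using cE by linarith
    obtain D where D: "D \<subseteq> D0" "card D = 4" "finite D" by (rule obtain_subset_with_card_n[OF c4])
    have DE: "\<And>a. a \<in> D \<Longrightarrow> a \<in> R \<and> n - a \<in> R \<and> 2 * a < n" using D unfolding D0_def E_def by auto
    have fD: "finite D" by (rule D(3))
    have U: "?U n D \<subseteq> R" using DE by auto
    have disj: "D \<inter> (\<lambda>a. n - a) ` D = {}"
    proof (rule ccontr)
      assume "D \<inter> (\<lambda>a. n - a) ` D \<noteq> {}"
      then obtain a a' where "a \<in> D" "a' \<in> D" "a = n - a'" by auto
      then show False using DE[of a] DE[of a'] by linarith
    qed
    have cU: "card (?U n D) = 8"
      using card_Un_disjoint[OF fD _ disj] card_image[of "\<lambda>a. n - a" D] D(2) fD by (simp add: inj_on_def)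
    obtain a where a: "a \<in> D" using D(2) by fastforce
    have "a \<in> I" "n - a \<in> I" using DE[OF a] RI by auto
    then have "n \<in> {0..2*H}" using I by auto
    then have "(n, D) \<in> X" unfolding X_def using D(2) DE RI by auto
    then show "\<exists>x\<in>X. ?U (fst x) (snd x) \<subseteq> R \<and> (?U (fst x) (snd x) \<subseteq> I \<and> card (?U (fst x) (snd x)) = 8)"
      using U cU RI by (intro bexI[of _ "(n, D)"]) auto
  qed
  also have "\<dots> \<le> (\<Sum>x\<in>X. q ^ 8)"
    by (intro sum_mono rprob_cond_subset[OF fI q0]) auto
  also have "\<dots> = real (card X) * q ^ 8" by simp
  also have "\<dots> \<le> real (nat (2*H+1)) * real L ^ 4 * q ^ 8"
  proof -
    have "card X = nat (2*H+1) * card {D. D \<subseteq> I \<and> card D = 4}"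
      unfolding X_def by (simp add: card_cartesian_product)
    also have "\<dots> \<le> nat (2*H+1) * L ^ 4" using card_subsets4[OF fI L] by simp
    finally have "real (card X) \<le> real (nat (2*H+1)) * real L ^ 4"
      by (metis of_nat_le_iff of_nat_mult of_nat_power)
    then show ?thesis using q0 by (intro mult_right_mono) auto
  qed
  finally show ?thesis .
qed


lemma partC:
  fixes H :: int
  assumes I: "I = {1..H}" and L: "card I = L" and q0: "0 \<le> q" and q1: "q \<le> 1"
  shows "rprob I q (\<lambda>R. \<exists>n. n \<noteq> 0 \<and> conv (indicator R) (indicator (uminus ` R)) n \<ge> 8) \<le> real (nat (2*H+1)) * real L ^ 4 * q ^ 8"
proof -
  have fI: "finite I" using I by simp
  define X where "X = {0..2*H} \<times> {D. D \<subseteq> I \<and> card D = 4}"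
  let ?U = "\<lambda>(d::int) D. D \<union> (\<lambda>a. a + d) ` D"
  have fX: "finite X" unfolding X_def using fI by simp
  have "rprob I q (\<lambda>R. \<exists>n. n \<noteq> 0 \<and> conv (indicator R) (indicator (uminus ` R)) n \<ge> 8)
      \<le> (\<Sum>x\<in>X. rprob I q (\<lambda>R. ?U (fst x) (snd x) \<subseteq> R \<and> (?U (fst x) (snd x) \<subseteq> I \<and> card (?U (fst x) (snd x)) = 8)))"
  proof (rule rprob_le_Ex[OF fI q0 q1 fX])
    fix R assume RI: "R \<subseteq> I" and "\<exists>n. n \<noteq> 0 \<and> conv (indicator R) (indicator (uminus ` R)) n \<ge> 8"
    then obtain n where n0: "n \<noteq> 0" and n: "conv (indicator R) (indicator (uminus ` R)) n \<ge> 8" by blast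
    have fR: "finite R" using RI fI finite_subset by blast
    define d where "d = \<bar>n\<bar>"
    have d0: "0 < d" using n0 unfolding d_def by simp
    define E where "E = {c\<in>R. c + d \<in> R}"
    have fE: "finite E" using fR unfolding E_def by auto
    have cE0: "8 \<le> card {a\<in>R. a - n \<in> R}" using n conv_RmR[OF fR, of n] by simp
    have cE: "8 \<le> card E"
    proof (cases "n > 0")
      case True
      have "(\<lambda>a. a - n) ` {a\<in>R. a - n \<in> R} \<subseteq> E" unfolding E_def d_def using True by auto
      moreover have "card ((\<lambda>a. a - n) ` {a\<in>R. a - n \<in> R}) = card {a\<in>R. a - n \<in> R}"
        by (rule card_image) (simp add: inj_on_def)
      ultimately show ?thesis using cE0 card_mono[OF fE, of "(\<lambda>a. a - n) ` {a\<in>R. a - n \<in> R}"] by linarith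
    next
      case False
      then have "{a\<in>R. a - n \<in> R} = E" unfolding E_def d_def using n0 by auto
      then show ?thesis using cE0 by simp
    qed
    define E0 where "E0 = {c\<in>E. even (c div d)}"
    define E1 where "E1 = {c\<in>E. odd (c div d)}"
    have "E = E0 \<union> E1" unfolding E0_def E1_def by auto
    then have "card E \<le> card E0 + card E1" using card_Un_le by metis
    then have "4 \<le> card E0 \<or> 4 \<le> card E1" using cE by linarith
    then obtain F where F: "F \<subseteq> E" "4 \<le> card F" and par: "\<And>c c'. c \<in> F \<Longrightarrow> c' \<in> F \<Longrightarrow> c \<noteq> c' + d"
    proof
      assume h: "4 \<le> card E0"
      show thesis
      proof (rule that[of E0])
        fix c c' assume "c \<in> E0" "c' \<in> E0"
        then have "even (c div d)" "even (c' div d)" unfolding E0_def by auto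
        moreover have "(c' + d) div d = c' div d + 1" using d0 by simp
        ultimately show "c \<noteq> c' + d" by auto
      qed (use h in \<open>auto simp: E0_def\<close>)
    next
      assume h: "4 \<le> card E1"
      show thesis
      proof (rule that[of E1])
        fix c c' assume "c \<in> E1" "c' \<in> E1"
        then have "odd (c div d)" "odd (c' div d)" unfolding E1_def by auto
        moreover have "(c' + d) div d = c' div d + 1" using d0 by simp
        ultimately show "c \<noteq> c' + d" by auto
      qed (use h in \<open>auto simp: E1_def\<close>)
    qed
    obtain D where D: "D \<subseteq> F" "card D = 4" "finite D" by (rule obtain_subset_with_card_n[OF F(2)])
    have DE: "\<And>a. a \<in> D \<Longrightarrow> a \<in> R \<and> a + d \<in> R" using D F unfolding E_def by auto
    have U: "?U d D \<subseteq> R" using DE by auto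
    have disj: "D \<inter> (\<lambda>a. a + d) ` D = {}"
    proof (rule ccontr)
      assume "D \<inter> (\<lambda>a. a + d) ` D \<noteq> {}"
      then obtain a a' where "a \<in> D" "a' \<in> D" "a = a' + d" by auto
      then show False using par D(1) by blast
    qed
    have cU: "card (?U d D) = 8"
      using card_Un_disjoint[OF D(3) _ disj] card_image[of "\<lambda>a. a + d" D] D(2,3) by (simp add: inj_on_def)
    obtain a where a: "a \<in> D" using D(2) by fastforce
    have "a \<in> I" "a + d \<in> I" using DE[OF a] RI by auto
    then have "d \<in> {0..2*H}" using I d0 by auto
    then have "(d, D) \<in> X" unfolding X_def using D(2) DE RI by auto
    then show "\<exists>x\<in>X. ?U (fst x) (snd x) \<subseteq> R \<and> (?U (fst x) (snd x) \<subseteq> I \<and> card (?U (fst x) (snd x)) = 8)"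
      using U cU RI by (intro bexI[of _ "(d, D)"]) auto
  qed
  also have "\<dots> \<le> (\<Sum>x\<in>X. q ^ 8)"
    by (intro sum_mono rprob_cond_subset[OF fI q0]) auto
  also have "\<dots> = real (card X) * q ^ 8" by simp
  also have "\<dots> \<le> real (nat (2*H+1)) * real L ^ 4 * q ^ 8"
  proof -
    have "card X = nat (2*H+1) * card {D. D \<subseteq> I \<and> card D = 4}"
      unfolding X_def by (simp add: card_cartesian_product)
    also have "\<dots> \<le> nat (2*H+1) * L ^ 4" using card_subsets4[OF fI L] by simp
    finally have "real (card X) \<le> real (nat (2*H+1)) * real L ^ 4"
      by (metis of_nat_le_iff of_nat_mult of_nat_power)
    then show ?thesis using q0 by (intro mult_right_mono) auto
  qed
  finally show ?thesis .
qed

lemma partA: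
  fixes H :: int
  assumes I: "I = {1..H}" and L: "card I = L" and q0: "0 \<le> q" and q1: "q \<le> 1"
  shows "rexp I q (\<lambda>R. real (card (R \<inter> {a + b + e | a b e. a \<in> R \<and> b \<in> R \<and> e \<in> {0, 1}})))
     \<le> 2 * real L ^ 2 * q ^ 3 + 2 * real L * q ^ 2"
proof -
  have fI: "finite I" using I by simp
  define G where "G = I \<times> I \<times> ({0,1} :: int set)"
  define T where "T = {t \<in> G. fst t + fst (snd t) + snd (snd t) \<in> I}"
  define el where "el t = {fst t, fst (snd t), fst t + fst (snd t) + snd (snd t)}" for t :: "int \<times> int \<times> int"
  have fG: "finite G" "finite T" unfolding G_def T_def using fI by auto
  have TG: "T \<subseteq> G" unfolding T_def by auto
  have step: "real (card (R \<inter> {a + b + e | a b e. a \<in> R \<and> b \<in> R \<and> e \<in> {0, 1}})) \<le> (\<Sum>t\<in>T. if el t \<subseteq> R then 1 else 0)"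
    if R: "R \<subseteq> I" for R
  proof -
    let ?f = "\<lambda>t::int \<times> int \<times> int. fst t + fst (snd t) + snd (snd t)"
    have "R \<inter> {a + b + e | a b e. a \<in> R \<and> b \<in> R \<and> e \<in> {0, 1}} \<subseteq> ?f ` {t\<in>T. el t \<subseteq> R}"
    proof
      fix x assume "x \<in> R \<inter> {a + b + e | a b e. a \<in> R \<and> b \<in> R \<and> e \<in> {0, 1}}"
      then obtain a b e where h: "x \<in> R" "x = a + b + e" "a \<in> R" "b \<in> R" "e \<in> {0,1}" by blast
      have "(a,b,e) \<in> {t\<in>T. el t \<subseteq> R}" using h R unfolding T_def G_def el_def by auto
      then show "x \<in> ?f ` {t\<in>T. el t \<subseteq> R}" using h(2) by force
    qed
    then have "card (R \<inter> {a + b + e | a b e. a \<in> R \<and> b \<in> R \<and> e \<in> {0, 1}}) \<le> card (?f ` {t\<in>T. el t \<subseteq> R})"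
      using fG by (intro card_mono) auto
    also have "\<dots> \<le> card {t\<in>T. el t \<subseteq> R}" using fG by (intro card_image_le) auto
    finally have "real (card (R \<inter> {a + b + e | a b e. a \<in> R \<and> b \<in> R \<and> e \<in> {0, 1}})) \<le> real (card {t\<in>T. el t \<subseteq> R})"
      by (simp only: of_nat_le_iff)
    also have "\<dots> = (\<Sum>t\<in>T. if el t \<subseteq> R then 1 else 0)"
      by (simp only: real_of_card sum.inter_filter[OF fG(2)])
    finally show ?thesis .
  qed
  have "rexp I q (\<lambda>R. real (card (R \<inter> {a + b + e | a b e. a \<in> R \<and> b \<in> R \<and> e \<in> {0, 1}})))
     \<le> rexp I q (\<lambda>R. \<Sum>t\<in>T. if el t \<subseteq> R then 1 else 0)"
    by (rule rexp_mono[OF q0 q1 step])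
  also have "\<dots> = (\<Sum>t\<in>T. q ^ card (el t))"
    unfolding rexp_sum
  proof (intro sum.cong refl)
    fix t assume "t \<in> T"
    then have "el t \<subseteq> I" unfolding T_def G_def el_def by auto
    then show "rexp I q (\<lambda>R. if el t \<subseteq> R then 1 else 0) = q ^ card (el t)" by (rule rexp_subset[OF fI])
  qed
  also have "\<dots> \<le> (\<Sum>t\<in>T. q ^ 3 + (if fst t = fst (snd t) then q ^ 2 else 0))"
  proof (intro sum_mono)
    fix t assume t: "t \<in> T"
    obtain a b e where te: "t = (a,b,e)" by (cases t) auto
    have h: "a \<ge> 1" "b \<ge> 1" "e \<ge> 0" using t I unfolding te T_def G_def by auto
    show "q ^ card (el t) \<le> q ^ 3 + (if fst t = fst (snd t) then q ^ 2 else 0)"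
    proof (cases "a = b")
      case True
      have "card (el t) = 2" unfolding te el_def using True h by simp
      then show ?thesis using True te q0 by simp
    next
      case False
      have "card (el t) = 3" unfolding te el_def using False h by simp
      then show ?thesis using False te q0 by simp
    qed
  qed
  also have "\<dots> \<le> (\<Sum>t\<in>G. q ^ 3 + (if fst t = fst (snd t) then q ^ 2 else 0))"
    using q0 by (intro sum_mono2[OF fG(1) TG]) auto
  also have "\<dots> = real (card G) * q ^ 3 + q ^ 2 * real (card {t\<in>G. fst t = fst (snd t)})"
  proof -
    have c: "real (card {t\<in>G. fst t = fst (snd t)}) = (\<Sum>t\<in>G. if fst t = fst (snd t) then 1 else 0)"
      by (simp only: real_of_card sum.inter_filter[OF fG(1)])
    have "(\<Sum>t\<in>G. (if fst t = fst (snd t) then q ^ 2 else 0)) = (\<Sum>t\<in>G. q ^ 2 * (if fst t = fst (snd t) then 1 else 0))"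
      by (intro sum.cong refl) simp
    also have "\<dots> = q ^ 2 * real (card {t\<in>G. fst t = fst (snd t)})"
      unfolding c by (simp only: sum_distrib_left)
    finally have e: "(\<Sum>t\<in>G. (if fst t = fst (snd t) then q ^ 2 else 0)) = q ^ 2 * real (card {t\<in>G. fst t = fst (snd t)})" .
    show ?thesis unfolding sum.distrib e by simp
  qed
  also have "\<dots> = 2 * real L ^ 2 * q ^ 3 + 2 * real L * q ^ 2"
  proof -
    have "card G = L * L * 2" unfolding G_def using L by (simp add: card_cartesian_product)
    moreover have "card {t\<in>G. fst t = fst (snd t)} = L * 2"
    proof -
      have "{t\<in>G. fst t = fst (snd t)} = (\<lambda>(a,e). (a,a,e)) ` (I \<times> {0,1})" unfolding G_def by auto
      moreover have "inj_on (\<lambda>(a,e). (a,a,e)) (I \<times> ({0,1}::int set))" by (auto simp: inj_on_def)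
      ultimately show ?thesis using L by (simp add: card_image card_cartesian_product)
    qed
    ultimately show ?thesis by (simp add: power2_eq_square)
  qed
  finally show ?thesis .
qed

locale PP =
  fixes p :: nat and K1 :: real
  assumes K1_ge: "2 \<le> K1"
    and K1_prop: "\<And>K. K1 \<le> K \<Longrightarrow> ln 3 + K + ln (K^2+1) + ln K + 3*K^2*ln K + 1 + K^2 - K^3/1280000 \<le> 0"
    and K1_cube: "\<And>K. K1 \<le> K \<Longrightarrow> 2560000 \<le> K^3"
    and c1: "K1 \<le> ln (real p)"
    and c2: "(2 * ln (real p))^9 \<le> real p powr (1/3)"
    and c3: "1280000 * (2 * ln (real p))^3 \<le> real p powr (1/3)"
    and c4: "2 * ln (real p) \<le> real p powr (2/3)"
    and c5: "3200 \<le> real p powr (1/3)"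
begin

abbreviation "K \<equiv> real_of_int \<lceil>ln (real p)\<rceil>"
abbreviation "q \<equiv> K * real p powr (-2/3)"
abbreviation "r \<equiv> real p powr (1/3)"

lemma p_pos: "0 < real p"
proof (rule ccontr)
  assume "\<not> 0 < real p"
  then have "real p = 0" by simp
  then show False using c5 by simp
qed

lemma r_pos: "0 < r" using p_pos by simp

lemma r2: "r ^ 2 = real p powr (2/3)"
proof -
  have "r ^ 2 = r * r" by (simp add: power2_eq_square)
  also have "\<dots> = real p powr (1/3 + 1/3)" by (rule powr_add[symmetric])
  finally show ?thesis by simp
qed

lemma r3: "r ^ 3 = real p"
proof -
  have "r ^ 3 = r * r * r" by (simp add: power3_eq_cube)
  also have "\<dots> = real p powr (1/3 + 1/3 + 1/3)" by (simp only: powr_add)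
  finally show ?thesis using p_pos by simp
qed

lemma pm23: "real p powr (-2/3) = 1 / r ^ 2"
proof -
  have "real p powr (-2/3) * real p powr (2/3) = real p powr (-2/3 + 2/3)" by (rule powr_add[symmetric])
  then have "real p powr (-2/3) * r ^ 2 = 1" using p_pos r2 by simp
  then show ?thesis using r_pos by (simp add: field_simps)
qed

lemma q_eq: "q = K / r ^ 2" using pm23 by simp

lemma lnp: "2 \<le> ln (real p)" using c1 K1_ge by linarith

lemma K_ge: "ln (real p) \<le> K" by simp

lemma K_le: "K \<le> 2 * ln (real p)"
  using lnp by linarith

lemma K_ge2: "2 \<le> K" using lnp K_ge by linarith

lemma K1_le_K: "K1 \<le> K" using c1 K_ge by linarith

lemma p_le_expK: "real p \<le> exp K"
proof -
  have "real p = exp (ln (real p))" using p_pos by simp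
  also have "\<dots> \<le> exp K" using K_ge by simp
  finally show ?thesis .
qed

lemma q_nonneg: "0 \<le> q" using K_ge2 by simp

lemma q_le1: "q \<le> 1"
proof -
  have "K \<le> r ^ 2" using K_le c4 r2 by linarith
  then show ?thesis unfolding q_eq using r_pos by (simp add: field_simps)
qed

lemma K9: "K ^ 9 \<le> r"
proof -
  have "K ^ 9 \<le> (2 * ln (real p)) ^ 9" using K_le K_ge2 by (intro power_mono) auto
  then show ?thesis using c2 by linarith
qed

lemma K3: "1280000 * K ^ 3 \<le> r"
proof -
  have "K ^ 3 \<le> (2 * ln (real p)) ^ 3" using K_le K_ge2 by (intro power_mono) auto
  then show ?thesis using c3 by linarith
qed

end

context PP
begin

lemma L_le: "real (nat (int p div 2 - 1)) \<le> real p / 2"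
proof -
  have "nat (int p div 2 - 1) \<le> p div 2" by linarith
  then have "real (nat (int p div 2 - 1)) \<le> real (p div 2)" by linarith
  also have "real (p div 2) \<le> real p / 2" by linarith
  finally show ?thesis .
qed

lemma cardI: "card {1..int p div 2 - 1} = nat (int p div 2 - 1)" by simp

lemma q_pos: "0 < q"
proof -
  have k0: "0 < K" using K_ge2 by linarith
  have r0: "0 < r ^ 2" using r_pos by (rule zero_less_power)
  have "0 < K / r ^ 2" by (rule divide_pos_pos[OF k0 r0])
  then show ?thesis using q_eq by simp
qed

lemma mainA:
  "rexp {1..int p div 2 - 1} q (\<lambda>R. real (card (R \<inter> {a + b + e | a b e. a \<in> R \<and> b \<in> R \<and> e \<in> {0, 1}}))) \<le> 300 * K ^ 3"
proof -
  let ?L = "nat (int p div 2 - 1)"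
  have "rexp {1..int p div 2 - 1} q (\<lambda>R. real (card (R \<inter> {a + b + e | a b e. a \<in> R \<and> b \<in> R \<and> e \<in> {0, 1}})))
      \<le> 2 * real ?L ^ 2 * q ^ 3 + 2 * real ?L * q ^ 2"
    by (rule partA[OF refl cardI q_nonneg q_le1])
  also have "\<dots> \<le> 2 * (real p / 2) ^ 2 * q ^ 3 + 2 * (real p / 2) * q ^ 2"
    using L_le q_nonneg by (intro add_mono mult_right_mono mult_left_mono power_mono) auto
  also have "\<dots> = K ^ 3 / 2 + K ^ 2 / r"
  proof -
    have "2 * (real p / 2) ^ 2 * q ^ 3 + 2 * (real p / 2) * q ^ 2 = 2 * (r ^ 3 / 2) ^ 2 * (K / r ^ 2) ^ 3 + 2 * (r ^ 3 / 2) * (K / r ^ 2) ^ 2"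
      unfolding q_eq r3 ..
    also have "\<dots> = K ^ 3 / 2 + K ^ 2 / r" using r_pos by (simp add: field_simps power2_eq_square power3_eq_cube)
    finally show ?thesis .
  qed
  also have "\<dots> \<le> 300 * K ^ 3"
  proof -
    have "K ^ 2 / r \<le> K ^ 2" using r_pos c5 by (simp add: divide_le_eq) (use K_ge2 in \<open>simp add: mult_le_cancel_left1\<close>)
    moreover have "K ^ 2 \<le> K ^ 3" using K_ge2 by (intro power_increasing) auto
    moreover have "0 \<le> K ^ 3" using K_ge2 by simp
    ultimately show ?thesis by linarith
  qed
  finally show ?thesis .
qed

lemma bc_bound: "real (nat (2 * (int p div 2 - 1) + 1)) * real (nat (int p div 2 - 1)) ^ 4 * q ^ 8 \<le> 300 / K"
proof -
  have h: "2 * (int p div 2 - 1) + 1 \<le> int p" by presburger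
  then have "nat (2 * (int p div 2 - 1) + 1) \<le> p" by (simp add: nat_le_iff)
  then have "real (nat (2 * (int p div 2 - 1) + 1)) \<le> real p" by (simp only: of_nat_le_iff)
  then have "real (nat (2 * (int p div 2 - 1) + 1)) * real (nat (int p div 2 - 1)) ^ 4 * q ^ 8 \<le> real p * (real p / 2) ^ 4 * q ^ 8"
    using L_le q_nonneg by (intro mult_right_mono mult_mono power_mono) auto
  also have "\<dots> = K ^ 8 / (16 * r)"
  proof -
    have "real p * (real p / 2) ^ 4 * q ^ 8 = r ^ 3 * (r ^ 3 / 2) ^ 4 * (K / r ^ 2) ^ 8" unfolding q_eq r3 ..
    also have "\<dots> = K ^ 8 / (16 * r)" using r_pos by (simp add: field_simps) (simp add: power_Suc[symmetric])
    finally show ?thesis .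
  qed
  also have "\<dots> \<le> 1 / K"
  proof -
    have "K ^ 8 * K = K ^ 9" using power_Suc2[of K 8] by simp
    then have "K ^ 8 * K \<le> 16 * r" using K9 r_pos by linarith
    then have h: "K ^ 8 * K \<le> 16 * r" .
    have k0: "0 < K" using K_ge2 by linarith
    have "K ^ 8 / (16 * r) = (K ^ 8 * K) / (16 * r) / K" using k0 by simp
    also have "\<dots> \<le> (16 * r) / (16 * r) / K"
    proof -
      have i1: "(K ^ 8 * K) / (16 * r) \<le> (16 * r) / (16 * r)"
        by (rule divide_right_mono[OF h]) (use r_pos in simp)
      show ?thesis by (rule divide_right_mono[OF i1]) (use k0 in linarith)
    qed
    also have "\<dots> = 1 / K" using r_pos by simp
    finally show ?thesis .
  qed
  also have "\<dots> \<le> 300 / K" using K_ge2 by (simp add: divide_right_mono)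
  finally show ?thesis .
qed

lemma mainB: "rprob {1..int p div 2 - 1} q (\<lambda>R. \<exists>n. conv (indicator R) (indicator R) n \<ge> 9) \<le> 300 / K"
  using partB[OF refl cardI q_nonneg q_le1] bc_bound by linarith

lemma mainC: "rprob {1..int p div 2 - 1} q (\<lambda>R. \<exists>n. n \<noteq> 0 \<and> conv (indicator R) (indicator (uminus ` R)) n \<ge> 8) \<le> 300 / K"
  using partC[OF refl cardI q_nonneg q_le1] bc_bound by linarith

end

lemma geo_int:
  fixes P mm n \<alpha> a b :: int
  assumes "279 \<le> mm" "200*mm \<le> P" "P \<le> 200*mm + 199" "P \<le> 5*n" "5*n \<le> 7*P"
    "\<alpha> = (n div mm + 2) div 3"
    "\<alpha>*mm + 1 \<le> a" "a \<le> (\<alpha>+1)*mm" "(\<alpha>+1)*mm + 1 \<le> b" "b \<le> (\<alpha>+2)*mm"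
  shows "mm \<le> n - a - b \<and> n - a - b < \<alpha>*mm + 1"
proof -
  define \<nu> where "\<nu> = n div mm"
  have mm0: "0 < mm" using assms(1) by simp
  have h1: "\<nu> * mm \<le> n" unfolding \<nu>_def using mm0 by (metis mult.commute mult_div_mod_eq le_add_same_cancel1 pos_mod_sign)
  have h2: "n < \<nu> * mm + mm" unfolding \<nu>_def using mm0
    by (metis add.commute add_less_cancel_left mult.commute mult_div_mod_eq pos_mod_bound)
  have a3: "\<nu> \<le> 3 * \<alpha>" "3 * \<alpha> \<le> \<nu> + 2" using assms(6) unfolding \<nu>_def by linarith+
  have nu40: "40 \<le> \<nu>"
  proof (rule ccontr)
    assume "\<not> 40 \<le> \<nu>"
    then have "\<nu> + 1 \<le> 40" by simp
    then have "(\<nu> + 1) * mm \<le> 40 * mm" using mm0 by (intro mult_right_mono) auto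
    then show False using h2 assms(2,4) by (simp add: algebra_simps)
  qed
  have e1: "0 \<le> (\<nu> - 2*\<alpha> - 4) * mm" using nu40 a3 mm0 by (intro mult_nonneg_nonneg) auto
  have e2: "0 \<le> (3*\<alpha> - \<nu>) * mm" using a3 mm0 by (intro mult_nonneg_nonneg) auto
  have "mm \<le> n - a - b" using e1 h1 assms(8,10) by (simp add: algebra_simps)
  moreover have "n - a - b < \<alpha>*mm + 1" using e2 h2 assms(7,9) by (simp add: algebra_simps)
  ultimately show ?thesis by simp
qed

lemma alpha_range:
  fixes P mm n \<alpha> :: int
  assumes "279 \<le> mm" "200*mm \<le> P" "P \<le> 200*mm + 199" "P \<le> 5*n" "5*n \<le> 7*P"
    "\<alpha> = (n div mm + 2) div 3"
  shows "1 \<le> \<alpha> \<and> \<alpha> \<le> 97"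
proof -
  define \<nu> where "\<nu> = n div mm"
  have mm0: "0 < mm" using assms(1) by simp
  have h1: "\<nu> * mm \<le> n" unfolding \<nu>_def using mm0 by (metis mult.commute mult_div_mod_eq le_add_same_cancel1 pos_mod_sign)
  have h2: "n < \<nu> * mm + mm" unfolding \<nu>_def using mm0
    by (metis add.commute add_less_cancel_left mult.commute mult_div_mod_eq pos_mod_bound)
  have nu40: "40 \<le> \<nu>"
  proof (rule ccontr)
    assume "\<not> 40 \<le> \<nu>"
    then have "\<nu> + 1 \<le> 40" by simp
    then have "(\<nu> + 1) * mm \<le> 40 * mm" using mm0 by (intro mult_right_mono) auto
    then show False using h2 assms(2,4) by (simp add: algebra_simps)
  qed
  have nu281: "\<nu> \<le> 281"
  proof (rule ccontr)
    assume "\<not> \<nu> \<le> 281"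
    then have "282 \<le> \<nu>" by simp
    then have "282 * mm \<le> \<nu> * mm" using mm0 by (intro mult_right_mono) auto
    then show False using h1 assms(1,3,5) by linarith
  qed
  show ?thesis using nu40 nu281 assms(6) unfolding \<nu>_def by linarith
qed

lemma nat_floor_le: "0 \<le> (y::real) \<Longrightarrow> real (nat \<lfloor>y\<rfloor>) \<le> y"
  by (simp add: of_nat_nat)

lemma nat_floor_ge: "0 \<le> (y::real) \<Longrightarrow> y - 1 \<le> real (nat \<lfloor>y\<rfloor>)"
  by (simp add: of_nat_nat)

context PP
begin

abbreviation "M \<equiv> p div 200"
abbreviation "\<tau> \<equiv> K ^ 5 * r"
abbreviation "N0 \<equiv> nat \<lfloor>q ^ 2 * real M ^ 2 / 8\<rfloor>"
abbreviation "kk \<equiv> nat \<lfloor>K ^ 2\<rfloor>"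

lemma k0: "0 < K" using K_ge2 by linarith

lemma tau_pos: "0 < \<tau>" by (rule mult_pos_pos[OF zero_less_power[OF k0] r_pos])

lemma kr_pos: "0 < K * r / 400" using mult_pos_pos[OF k0 r_pos] by simp

lemma p_big: "32768000000 \<le> real p"
proof -
  have "(3200::real) ^ 3 \<le> r ^ 3" using c5 by (intro power_mono) auto
  then show ?thesis using r3 by simp
qed

lemma M_ge: "real p / 400 \<le> real M"
proof -
  have "p \<le> 200 * M + 199" by linarith
  then have "real p \<le> 200 * real M + 199" by linarith
  then show ?thesis using p_big by linarith
qed

lemma M_le: "real M \<le> real p / 200"
proof -
  have "200 * M \<le> p" by linarith
  then have "200 * real M \<le> real p" by linarith
  then show ?thesis by linarith
qed

lemma M_big: "279 \<le> M"
proof -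
  have "279 \<le> real M" using M_ge p_big by linarith
  then show ?thesis by linarith
qed

lemma qM_ge: "K * r / 400 \<le> q * real M"
proof -
  have "q * real M \<ge> (K / r^2) * (r^3 / 400)"
    using M_ge q_nonneg unfolding q_eq[symmetric] r3 by (intro mult_left_mono) auto
  moreover have "(K / r^2) * (r^3 / 400) = K * r / 400" using r_pos by (simp add: field_simps power2_eq_square power3_eq_cube)
  ultimately show ?thesis by linarith
qed

lemma qM_le: "q * real M \<le> K * r / 200"
proof -
  have "q * real M \<le> (K / r^2) * (r^3 / 200)"
    using M_le q_nonneg unfolding q_eq[symmetric] r3 by (intro mult_left_mono) auto
  moreover have "(K / r^2) * (r^3 / 200) = K * r / 200" using r_pos by (simp add: field_simps power2_eq_square power3_eq_cube)
  ultimately show ?thesis by linarith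
qed

lemma qM_pos: "0 < q * real M" using qM_ge k0 r_pos by (smt (verit) divide_pos_pos mult_pos_pos)

lemma nb1: "8 / (q * real M) \<le> 1 / K"
proof -
  have "8 * K \<le> K * r / 400" using c5 k0 by (simp add: field_simps)
  then have h: "8 * K \<le> q * real M" using qM_ge by linarith
  have "8 / (q * real M) \<le> 8 / (8 * K)" using h k0 by (intro divide_left_mono) auto
  then show ?thesis by simp
qed

lemma nb2: "real M ^ 3 * q ^ 4 / \<tau> \<le> 1 / K"
proof -
  have "real M ^ 3 * q ^ 4 = (q * real M) ^ 3 * q" by (simp add: power_mult_distrib algebra_simps power3_eq_cube power4_eq_xxxx)
  also have "\<dots> \<le> (K * r / 200) ^ 3 * (K / r ^ 2)"
    using qM_le qM_pos q_nonneg unfolding q_eq by (intro mult_right_mono power_mono) auto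
  also have "\<dots> = K ^ 4 * r / 8000000" using r_pos by (simp add: field_simps power2_eq_square power3_eq_cube power4_eq_xxxx)
  also have "\<dots> \<le> K ^ 4 * r" using k0 r_pos by simp
  finally have h: "real M ^ 3 * q ^ 4 \<le> K ^ 4 * r" .
  have "real M ^ 3 * q ^ 4 / \<tau> \<le> K ^ 4 * r / \<tau>" using h tau_pos by (intro divide_right_mono) auto
  also have "\<dots> = 1 / K"
  proof -
    have "K ^ 5 = K ^ 4 * K" using power_Suc2[of K 4] by simp
    moreover have kne: "K \<noteq> 0" using k0 by linarith
    moreover have "K ^ 4 \<noteq> 0" using kne by (rule power_not_zero)
    ultimately show ?thesis using r_pos by simp
  qed
  finally show ?thesis .
qed

lemma Q2_ge: "K ^ 2 * r ^ 2 / 160000 \<le> q ^ 2 * real M ^ 2"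
proof -
  have "(K * r / 400) ^ 2 \<le> (q * real M) ^ 2" using qM_ge kr_pos by (intro power_mono) auto
  then show ?thesis by (simp add: power_mult_distrib power_divide)
qed

lemma Q2_le: "q ^ 2 * real M ^ 2 \<le> K ^ 2 * r ^ 2 / 40000"
proof -
  have "(q * real M) ^ 2 \<le> (K * r / 200) ^ 2" using qM_le qM_pos by (intro power_mono) auto
  then show ?thesis by (simp add: power_mult_distrib power_divide)
qed

lemma tau_le: "\<tau> \<le> q ^ 2 * real M ^ 2 / 8"
proof -
  have "K ^ 3 * (K ^ 2 * r) \<le> (r / 1280000) * (K ^ 2 * r)"
    using K3 k0 r_pos by (intro mult_right_mono) auto
  then have "\<tau> \<le> K ^ 2 * r ^ 2 / 1280000" by (simp add: power2_eq_square power3_eq_cube algebra_simps eval_nat_numeral)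
  then show ?thesis using Q2_ge by linarith
qed

lemma N0_le: "real N0 \<le> q ^ 2 * real M ^ 2 / 8"
  by (rule nat_floor_le) simp

lemma N0_ge: "q ^ 2 * real M ^ 2 / 8 - 1 \<le> real N0"
  by (rule nat_floor_ge) simp

lemma cond1: "real N0 \<le> (q * real M / 2) ^ 2 - \<tau>"
  using N0_le tau_le by (simp add: power_mult_distrib power_divide)

lemma kk_le: "real kk \<le> K ^ 2"
  by (rule nat_floor_le) simp

lemma K2_ge4: "4 \<le> K ^ 2"
proof -
  have "(2::real) ^ 2 \<le> K ^ 2" using K_ge2 by (intro power_mono) auto
  then show ?thesis by simp
qed

lemma Q2_ge8: "8 * K ^ 2 \<le> q ^ 2 * real M ^ 2 / 8"
proof -
  have "(3200::real) ^ 2 \<le> r ^ 2" using c5 by (intro power_mono) auto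
  then have "K ^ 2 * 3200 ^ 2 \<le> K ^ 2 * r ^ 2" using k0 by (intro mult_left_mono) auto
  then have "64 * K ^ 2 \<le> K ^ 2 * r ^ 2 / 160000" by simp
  then show ?thesis using Q2_ge by linarith
qed

lemma cond2: "kk \<le> N0"
proof -
  have "real kk \<le> real N0" using kk_le Q2_ge8 N0_ge K2_ge4 by linarith
  then show ?thesis by (simp only: of_nat_le_iff)
qed

lemma mu_le: "real N0 * q \<le> K ^ 3"
proof -
  have "real N0 * q \<le> (K ^ 2 * r ^ 2 / 40000 / 8) * q"
    using N0_le Q2_le q_nonneg by (intro mult_right_mono) auto
  also have "\<dots> = K ^ 3 / 320000" unfolding q_eq using r_pos by (simp add: field_simps power2_eq_square power3_eq_cube)
  also have "\<dots> \<le> K ^ 3" using k0 by simp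
  finally show ?thesis .
qed

lemma mu_ge: "K ^ 3 / 1280000 - 1 \<le> real N0 * q"
proof -
  have "K ^ 2 * r ^ 2 / 160000 / 8 - 1 \<le> real N0" using N0_ge Q2_ge by linarith
  then have "(K ^ 2 * r ^ 2 / 160000 / 8 - 1) * q \<le> real N0 * q"
    using q_nonneg by (rule mult_right_mono)
  moreover have "(K ^ 2 * r ^ 2 / 160000 / 8 - 1) * q = K ^ 3 / 1280000 - q"
    unfolding q_eq using r_pos by (simp add: field_simps power2_eq_square power3_eq_cube)
  ultimately show ?thesis using q_le1 by linarith
qed

lemma cond3: "1 \<le> real N0 * q"
  using mu_ge K1_cube[OF K1_le_K] by linarith

lemma exp_bound: "3 * exp K * (K ^ 2 + 1) * exp (3 * K ^ 2 * ln K + K ^ 2 + 1 - K ^ 3 / 1280000) \<le> 1 / K"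
proof -
  have e: "3 * exp K * (K ^ 2 + 1) * exp (3 * K ^ 2 * ln K + K ^ 2 + 1 - K ^ 3 / 1280000)
      = exp (ln 3 + K + ln (K^2+1) + 3*K^2*ln K + K^2 + 1 - K^3/1280000)"
  proof -
    have "exp (ln (K^2+1)) = K^2+1" by (rule exp_ln) (intro add_nonneg_pos zero_le_power2 zero_less_one)
    then show ?thesis by (simp add: exp_add exp_diff)
  qed
  have "ln 3 + K + ln (K^2+1) + 3*K^2*ln K + K^2 + 1 - K^3/1280000 \<le> - ln K"
    using K1_prop[OF K1_le_K] by linarith
  then have "exp (ln 3 + K + ln (K^2+1) + 3*K^2*ln K + K^2 + 1 - K^3/1280000) \<le> exp (- ln K)" by simp
  also have "\<dots> = 1 / K" using k0 by (simp add: exp_minus inverse_eq_divide)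
  finally show ?thesis using e by simp
qed

lemma nb3:
  assumes "card X \<le> 2 * p + 1"
  shows "real (card X) * (real (kk + 1) * (real N0 * q) ^ kk * (1 - q) ^ (N0 - kk)) \<le> 1 / K"
proof -
  let ?mu = "real N0 * q"
  have mu1: "1 \<le> ?mu" by (rule cond3)
  have t1: "real (kk + 1) \<le> K ^ 2 + 1" using kk_le by simp
  have t2: "?mu ^ kk \<le> exp (3 * K ^ 2 * ln K)"
  proof -
    have "?mu ^ kk \<le> (K ^ 3) ^ kk" using mu_le mu1 by (intro power_mono) auto
    also have "\<dots> = exp (ln (K ^ 3)) ^ kk" using k0 by simp
    also have "\<dots> = exp (real kk * ln (K ^ 3))" by (rule exp_of_nat_mult[symmetric])
    also have "\<dots> = exp (real kk * (3 * ln K))" using k0 by (simp add: ln_realpow)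
    also have "\<dots> \<le> exp (K ^ 2 * (3 * ln K))"
      using kk_le k0 K_ge2 by (intro iffD2[OF exp_le_cancel_iff] mult_right_mono) auto
    finally show ?thesis by (simp add: algebra_simps)
  qed
  have t3: "(1 - q) ^ (N0 - kk) \<le> exp (K ^ 2 + 1 - K ^ 3 / 1280000)"
  proof -
    have "(1 - q) ^ (N0 - kk) \<le> exp (- q) ^ (N0 - kk)"
      using q_le1 by (intro power_mono) (auto simp: exp_ge_add_one_self[of "-q", simplified])
    also have "\<dots> = exp (- q * real (N0 - kk))" by (simp add: exp_of_nat_mult[symmetric] mult.commute)
    also have "- q * real (N0 - kk) = - ?mu + q * real kk" using cond2 by (simp add: of_nat_diff algebra_simps)
    also have "\<dots> \<le> K ^ 2 + 1 - K ^ 3 / 1280000"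
    proof -
      have "q * real kk \<le> real kk" by (rule mult_left_le_one_le[OF _ q_nonneg q_le1]) simp
      then show ?thesis using mu_ge kk_le by linarith
    qed
    finally show ?thesis by simp
  qed
  have cX: "real (card X) \<le> 3 * exp K"
  proof -
    have "real (card X) \<le> 2 * real p + 1" using assms by linarith
    then show ?thesis using p_le_expK p_big by linarith
  qed
  have "real (card X) * (real (kk + 1) * ?mu ^ kk * (1 - q) ^ (N0 - kk))
      \<le> (3 * exp K) * ((K ^ 2 + 1) * exp (3 * K ^ 2 * ln K) * exp (K ^ 2 + 1 - K ^ 3 / 1280000))"
    using t1 t2 t3 cX mu1 q_le1 by (intro mult_mono) auto
  also have "\<dots> = 3 * exp K * (K ^ 2 + 1) * exp (3 * K ^ 2 * ln K + K ^ 2 + 1 - K ^ 3 / 1280000)"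
    by (simp add: exp_add[symmetric] algebra_simps)
  also have "\<dots> \<le> 1 / K" by (rule exp_bound)
  finally show ?thesis .
qed

end

context PP
begin

lemma mainD:
  "rprob {1..int p div 2 - 1} q (\<lambda>R. \<exists>n::int. real p / 5 \<le> real_of_int n \<and> real_of_int n \<le> 7 * real p / 5 \<and>
      real (card {T \<in> triples {1..int p div 2 - 1} n. T \<subseteq> R}) \<le> K ^ 2) \<le> 300 / K"
proof -
  let ?I = "{1..int p div 2 - 1}"
  define mm where "mm = int M"
  define Aa where "Aa \<alpha> = {\<alpha>*mm+1..(\<alpha>+1)*mm}" for \<alpha>
  define Bb where "Bb \<alpha> = {(\<alpha>+1)*mm+1..(\<alpha>+2)*mm}" for \<alpha>
  define Ns where "Ns \<alpha> = {n \<in> {0..2*int p}. real p / 5 \<le> real_of_int n \<and> real_of_int n \<le> 7 * real p / 5 \<and> (n div mm + 2) div 3 = \<alpha>}" for \<alpha>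
  have fI: "finite ?I" by simp
  have mm279: "279 \<le> mm" unfolding mm_def using M_big by simp
  have mmP: "200 * mm \<le> int p" "int p \<le> 200 * mm + 199" unfolding mm_def by linarith+
  have mmH: "99 * mm \<le> int p div 2 - 1" using mmP mm279 by linarith
  have window: "int p \<le> 5 * n \<and> 5 * n \<le> 7 * int p"
    if "real p / 5 \<le> real_of_int n" "real_of_int n \<le> 7 * real p / 5" for n
  proof -
    have "real_of_int (int p) \<le> real_of_int (5 * n)" "real_of_int (5 * n) \<le> real_of_int (7 * int p)"
      using that by simp_all
    then show ?thesis by (simp only: of_int_le_iff)
  qed
  have step: "rprob ?I q (\<lambda>R. \<exists>n::int. real p / 5 \<le> real_of_int n \<and> real_of_int n \<le> 7 * real p / 5 \<and>
      real (card {T \<in> triples ?I n. T \<subseteq> R}) \<le> K ^ 2)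
    \<le> (\<Sum>\<alpha>\<in>{1..97}. rprob ?I q (\<lambda>R. \<exists>n\<in>Ns \<alpha>. card {T \<in> triples ?I n. T \<subseteq> R} \<le> kk))"
  proof (rule rprob_le_Ex[OF fI q_nonneg q_le1])
    fix R assume "\<exists>n::int. real p / 5 \<le> real_of_int n \<and> real_of_int n \<le> 7 * real p / 5 \<and>
      real (card {T \<in> triples ?I n. T \<subseteq> R}) \<le> K ^ 2"
    then obtain n where n: "real p / 5 \<le> real_of_int n" "real_of_int n \<le> 7 * real p / 5"
      "real (card {T \<in> triples ?I n. T \<subseteq> R}) \<le> K ^ 2" by blast
    have ck: "card {T \<in> triples ?I n. T \<subseteq> R} \<le> kk" using n(3) by (rule le_nat_floor)
    define \<alpha> where "\<alpha> = (n div mm + 2) div 3"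
    have w: "int p \<le> 5 * n" "5 * n \<le> 7 * int p" using window[OF n(1,2)] by auto
    have ar: "1 \<le> \<alpha> \<and> \<alpha> \<le> 97" by (rule alpha_range[OF mm279 mmP w \<alpha>_def])
    have "n \<in> Ns \<alpha>" unfolding Ns_def \<alpha>_def using n(1,2) w by auto
    then show "\<exists>\<alpha>\<in>{1..97}. \<exists>n\<in>Ns \<alpha>. card {T \<in> triples ?I n. T \<subseteq> R} \<le> kk"
      using ar ck by auto
  qed simp
  also have "\<dots> \<le> (\<Sum>\<alpha>\<in>{1..97::int}. 3 / K)"
  proof (rule sum_mono)
    fix \<alpha> :: int assume "\<alpha> \<in> {1..97}"
    then have a: "1 \<le> \<alpha>" "\<alpha> \<le> 97" by auto
    have a0: "0 \<le> \<alpha> * mm" using a mm279 by simp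
    have a1: "\<alpha> * mm \<le> 97 * mm" using a mm279 by (intro mult_right_mono) auto
    have AI: "Aa \<alpha> \<subseteq> ?I"
    proof
      fix x assume "x \<in> Aa \<alpha>"
      then have "\<alpha>*mm+1 \<le> x" "x \<le> \<alpha>*mm + mm" unfolding Aa_def by (auto simp: algebra_simps)
      then have "1 \<le> x" "x \<le> int p div 2 - 1" using a0 a1 mmH mm279 by linarith+
      then show "x \<in> ?I" by simp
    qed
    have BI: "Bb \<alpha> \<subseteq> ?I"
    proof
      fix x assume "x \<in> Bb \<alpha>"
      then have "\<alpha>*mm+mm+1 \<le> x" "x \<le> \<alpha>*mm + 2*mm" unfolding Bb_def by (auto simp: algebra_simps)
      then have "1 \<le> x" "x \<le> int p div 2 - 1" using a0 a1 mmH mm279 by linarith+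
      then show "x \<in> ?I" by simp
    qed
    have AB: "Aa \<alpha> \<inter> Bb \<alpha> = {}" unfolding Aa_def Bb_def by auto
    have cA: "card (Aa \<alpha>) = M" unfolding Aa_def mm_def by (simp add: algebra_simps)
    have cB: "card (Bb \<alpha>) = M" unfolding Bb_def mm_def by (simp add: algebra_simps)
    have fN: "finite (Ns \<alpha>)" unfolding Ns_def by (rule finite_subset[of _ "{0..2*int p}"]) auto
    have cN: "card (Ns \<alpha>) \<le> 2 * p + 1"
    proof -
      have "card (Ns \<alpha>) \<le> card {0..2*int p}" unfolding Ns_def by (intro card_mono) auto
      then show ?thesis by simp
    qed
    have geo: "n - a - b \<in> ?I - (Aa \<alpha> \<union> Bb \<alpha>)" if "n \<in> Ns \<alpha>" "a \<in> Aa \<alpha>" "b \<in> Bb \<alpha>" for n a b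
    proof -
      have n: "real p / 5 \<le> real_of_int n" "real_of_int n \<le> 7 * real p / 5" "\<alpha> = (n div mm + 2) div 3"
        using that(1) unfolding Ns_def by auto
      have w: "int p \<le> 5 * n" "5 * n \<le> 7 * int p" using window[OF n(1,2)] by auto
      have ab: "\<alpha>*mm + 1 \<le> a" "a \<le> (\<alpha>+1)*mm" "(\<alpha>+1)*mm + 1 \<le> b" "b \<le> (\<alpha>+2)*mm"
        using that(2,3) unfolding Aa_def Bb_def by auto
      have g: "mm \<le> n - a - b \<and> n - a - b < \<alpha>*mm + 1" by (rule geo_int[OF mm279 mmP w n(3) ab])
      have h: "1 \<le> n - a - b" "n - a - b \<le> int p div 2 - 1" using g a0 a1 mmH mm279 by linarith+
      have "n - a - b \<notin> Aa \<alpha>" "n - a - b \<notin> Bb \<alpha>" using g mm279 unfolding Aa_def Bb_def by (auto simp: algebra_simps)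
      then show ?thesis using h by simp
    qed
    have "rprob ?I q (\<lambda>R. \<exists>n\<in>Ns \<alpha>. card {T \<in> triples ?I n. T \<subseteq> R} \<le> kk)
      \<le> 8 / (q * M) + real M ^ 3 * q ^ 4 / \<tau> + real (card (Ns \<alpha>)) * (real (kk+1) * (real N0 * q) ^ kk * (1 - q) ^ (N0 - kk))"
      by (rule partD_config[OF fI AI BI AB cA cB q_nonneg q_le1 qM_pos tau_pos fN geo cond1 cond2 cond3])
    also have "\<dots> \<le> 1 / K + 1 / K + 1 / K"
      using nb1 nb2 nb3[OF cN] by linarith
    finally show "rprob ?I q (\<lambda>R. \<exists>n\<in>Ns \<alpha>. card {T \<in> triples ?I n. T \<subseteq> R} \<le> kk) \<le> 3 / K" by simp
  qed
  also have "\<dots> = 291 / K" by simp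
  also have "\<dots> \<le> 300 / K" using k0 by (simp add: divide_right_mono)
  finally show ?thesis .
qed

end

lemma K1_exists:
  "\<exists>K1::real. 2 \<le> K1 \<and> (\<forall>K. K1 \<le> K \<longrightarrow> ln 3 + K + ln (K^2+1) + ln K + 3*K^2*ln K + 1 + K^2 - K^3/1280000 \<le> 0)
      \<and> (\<forall>K. K1 \<le> K \<longrightarrow> 2560000 \<le> K^3)"
proof -
  have "eventually (\<lambda>K::real. ln 3 + K + ln (K^2+1) + ln K + 3*K^2*ln K + 1 + K^2 - K^3/1280000 \<le> 0) at_top"
    by real_asymp
  moreover have "eventually (\<lambda>K::real. 2560000 \<le> K^3) at_top" by real_asymp
  ultimately have "eventually (\<lambda>K::real. (ln 3 + K + ln (K^2+1) + ln K + 3*K^2*ln K + 1 + K^2 - K^3/1280000 \<le> 0)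
       \<and> 2560000 \<le> K^3) at_top" by (rule eventually_conj)
  then obtain N :: real where N: "\<And>K::real. N \<le> K \<Longrightarrow> (ln 3 + K + ln (K^2+1) + ln K + 3*K^2*ln K + 1 + K^2 - K^3/1280000 \<le> 0)
       \<and> 2560000 \<le> K^3" unfolding eventually_at_top_linorder by blast
  show ?thesis by (rule exI[of _ "max N 2"]) (use N in auto)
qed

lemma X0_exists:
  fixes K1 :: real
  shows "\<exists>X0. \<forall>x\<ge>X0. K1 \<le> ln x \<and> (2 * ln x)^9 \<le> x powr (1/3) \<and> 1280000 * (2 * ln x)^3 \<le> x powr (1/3)
      \<and> 2 * ln x \<le> x powr (2/3) \<and> 3200 \<le> x powr (1/3)"
proof -
  have e1: "eventually (\<lambda>x::real. K1 \<le> ln x) at_top"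
    using ln_at_top unfolding filterlim_at_top by blast
  have e2: "eventually (\<lambda>x::real. (2 * ln x)^9 \<le> x powr (1/3)) at_top" by real_asymp
  have e3: "eventually (\<lambda>x::real. 1280000 * (2 * ln x)^3 \<le> x powr (1/3)) at_top" by real_asymp
  have e4: "eventually (\<lambda>x::real. 2 * ln x \<le> x powr (2/3)) at_top" by real_asymp
  have e5: "eventually (\<lambda>x::real. 3200 \<le> x powr (1/3)) at_top" by real_asymp
  have "eventually (\<lambda>x::real. K1 \<le> ln x \<and> (2 * ln x)^9 \<le> x powr (1/3) \<and> 1280000 * (2 * ln x)^3 \<le> x powr (1/3)
      \<and> 2 * ln x \<le> x powr (2/3) \<and> 3200 \<le> x powr (1/3)) at_top"
    using e1 e2 e3 e4 e5 by (intro eventually_conj)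
  then show ?thesis by (simp add: eventually_at_top_linorder)
qed

theorem mainTheorem9:
  shows "\<exists>C>0. \<exists>P0::nat. \<forall>p::nat. prime p \<and> P0 \<le> p \<longrightarrow>
    (let I = {1 .. int p div 2 - 1};
         K = real_of_int \<lceil>ln (real p)\<rceil>;
         q = K * real p powr (-2/3)
     in rexp I q (\<lambda>R. real (card (R \<inter> {a + b + e | a b e. a \<in> R \<and> b \<in> R \<and> e \<in> {0, 1}})))
          \<le> C * K ^ 3
      \<and> rprob I q (\<lambda>R. \<exists>n. conv (indicator R) (indicator R) n \<ge> 9) \<le> C / K
      \<and> rprob I q (\<lambda>R. \<exists>n. n \<noteq> 0 \<and> conv (indicator R) (indicator (uminus ` R)) n \<ge> 8) \<le> C / K
      \<and> rprob I q (\<lambda>R. \<exists>n::int. real p / 5 \<le> real_of_int n \<and> real_of_int n \<le> 7 * real p / 5 \<and>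
             real (card {T \<in> triples I n. T \<subseteq> R}) \<le> K ^ 2) \<le> C / K)"
proof -
  obtain K1 :: real where K1: "2 \<le> K1"
    "\<And>K. K1 \<le> K \<Longrightarrow> ln 3 + K + ln (K^2+1) + ln K + 3*K^2*ln K + 1 + K^2 - K^3/1280000 \<le> 0"
    "\<And>K. K1 \<le> K \<Longrightarrow> 2560000 \<le> K^3"
    using K1_exists by blast
  obtain X0 where X0: "\<And>x. X0 \<le> x \<Longrightarrow> K1 \<le> ln x \<and> (2 * ln x)^9 \<le> x powr (1/3) \<and> 1280000 * (2 * ln x)^3 \<le> x powr (1/3)
      \<and> 2 * ln x \<le> x powr (2/3) \<and> 3200 \<le> x powr (1/3)"
    using X0_exists[of K1] by blast
  show ?thesis
  proof (rule exI[of _ 300], rule conjI, simp, rule exI[of _ "nat \<lceil>X0\<rceil>"], intro allI impI)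
    fix p :: nat assume "prime p \<and> nat \<lceil>X0\<rceil> \<le> p"
    then have "X0 \<le> real p" by linarith
    note c = X0[OF this]
    interpret PP p K1
      by unfold_locales (use K1 c in auto)
    show "let I = {1 .. int p div 2 - 1};
         K = real_of_int \<lceil>ln (real p)\<rceil>;
         q = K * real p powr (-2/3)
     in rexp I q (\<lambda>R. real (card (R \<inter> {a + b + e | a b e. a \<in> R \<and> b \<in> R \<and> e \<in> {0, 1}})))
          \<le> 300 * K ^ 3
      \<and> rprob I q (\<lambda>R. \<exists>n. conv (indicator R) (indicator R) n \<ge> 9) \<le> 300 / K
      \<and> rprob I q (\<lambda>R. \<exists>n. n \<noteq> 0 \<and> conv (indicator R) (indicator (uminus ` R)) n \<ge> 8) \<le> 300 / K
      \<and> rprob I q (\<lambda>R. \<exists>n::int. real p / 5 \<le> real_of_int n \<and> real_of_int n \<le> 7 * real p / 5 \<and>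
             real (card {T \<in> triples I n. T \<subseteq> R}) \<le> K ^ 2) \<le> 300 / K"
      unfolding Let_def using mainA mainB mainC mainD by blast
  qed
qed

end
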